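(* Assume Assumption A and let $p\ge2$. There is a constant $C=C(b,\sigma,T,p)$ such that (i) $\mathbb{E}|X^n_{t_l}-T_{m,\pm}X^n_{t_l}|^p\le Ch^{p/2}$ for $1\le l,m\le n$; (ii) $\mathbb{E}\Big|\nabla X^{n,t_k,X^n_{t_k}}_{t_m}-\dfrac{\mathcal D^n_{k+1}X^n_{t_m}}{\sigma(t_{k+1},X^n_{t_k})}\Big|^p\le Ch^{p/2}$ for $0\le k<m\le n$; (iii) $\mathbb{E}|\mathcal D^n_kX^n_{t_m}|^p\le C$ for $1\le k\le m\le n$.
   Context: Fix $T>0$, $n$, $h=T/n$, $t_j=jh$. Assumption A: $b,\sigma:[0,T]\times\mathbb{R}\to\mathbb{R}$ and their first and second space derivatives are continuous and bounded, these derivatives locally $\gamma$-Hölder in the parabolic metric, $b,\sigma$ $\tfrac12$-Hölder in time uniformly in space, $\sigma\ge\delta>0$. $(\varepsilon_i)_{i=1}^n$ i.i.d. Rademacher. $X^n_{t_0}=x$, $X^n_{t_k}=x+h\sum_{j=1}^kb(t_j,X^n_{t_{j-1}})+\sqrt h\sum_{j=1}^k\sigma(t_j,X^n_{t_{j-1}})\varepsilon_j$. For $x'\in\mathbb{R}$, $X^{n,t_k,x'}_{t_m}$ ($m\ge k$) is the same recursion started at time $t_k$ from $x'$ with $\varepsilon_{k+1},\dots,\varepsilon_m$, and $\nabla X^{n,t_k,x'}_{t_m}=1+h\sum_{l=k+1}^mb_x(t_l,X^{n,t_k,x'}_{t_{l-1}})\nabla X^{n,t_k,x'}_{t_{l-1}}+\sqrt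 h\sum_{l=k+1}^m\sigma_x(t_l,X^{n,t_k,x'}_{t_{l-1}})\nabla X^{n,t_k,x'}_{t_{l-1}}\varepsilon_l$. For $\xi=F(\varepsilon_1,\dots,\varepsilon_n)$: $T_{m,\pm}\xi:=F(\varepsilon_1,\dots,\varepsilon_{m-1},\pm1,\varepsilon_{m+1},\dots,\varepsilon_n)$ and $\mathcal D^n_m\xi:=(T_{m,+}\xi-T_{m,-}\xi)/(2\sqrt h)$. *)

theory Defs
  imports "HOL-Analysis.Analysis"
begin

definition dx :: "(real \<Rightarrow> real \<Rightarrow> real) \<Rightarrow> real \<Rightarrow> real \<Rightarrow> real" where
  "dx f t x = deriv (f t) x"

definition dxx :: "(real \<Rightarrow> real \<Rightarrow> real) \<Rightarrow> real \<Rightarrow> real \<Rightarrow> real" where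
  "dxx f t x = deriv (dx f t) x"

definition cont_bdd :: "real \<Rightarrow> (real \<Rightarrow> real \<Rightarrow> real) \<Rightarrow> bool" where
  "cont_bdd T f \<longleftrightarrow> continuous_on ({0..T} \<times> UNIV) (\<lambda>(t, x). f t x)
     \<and> (\<exists>M. \<forall>t\<in>{0..T}. \<forall>x. \<bar>f t x\<bar> \<le> M)"

definition loc_hoelder_par :: "real \<Rightarrow> real \<Rightarrow> (real \<Rightarrow> real \<Rightarrow> real) \<Rightarrow> bool" where
  "loc_hoelder_par T \<gamma> f \<longleftrightarrow> (\<forall>R>0. \<exists>L. \<forall>s\<in>{0..T}. \<forall>t\<in>{0..T}. \<forall>x y.
      \<bar>x\<bar> \<le> R \<longrightarrow> \<bar>y\<bar> \<le> R \<longrightarrow>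
      \<bar>f s x - f t y\<bar> \<le> L * (sqrt \<bar>s - t\<bar> + \<bar>x - y\<bar>) powr \<gamma>)"

definition half_hoelder_time :: "real \<Rightarrow> (real \<Rightarrow> real \<Rightarrow> real) \<Rightarrow> bool" where
  "half_hoelder_time T f \<longleftrightarrow> (\<exists>L. \<forall>s\<in>{0..T}. \<forall>t\<in>{0..T}. \<forall>x.
      \<bar>f s x - f t x\<bar> \<le> L * sqrt \<bar>s - t\<bar>)"

definition twice_space_diff :: "real \<Rightarrow> (real \<Rightarrow> real \<Rightarrow> real) \<Rightarrow> bool" where
  "twice_space_diff T f \<longleftrightarrow> (\<forall>t\<in>{0..T}. \<forall>x.
      (f t has_real_derivative dx f t x) (at x) \<and>
      (dx f t has_real_derivative dxx f t x) (at x))"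

definition assumption_A :: "real \<Rightarrow> (real \<Rightarrow> real \<Rightarrow> real) \<Rightarrow> (real \<Rightarrow> real \<Rightarrow> real) \<Rightarrow> bool" where
  "assumption_A T b \<sigma> \<longleftrightarrow>
     twice_space_diff T b \<and> twice_space_diff T \<sigma> \<and>
     cont_bdd T b \<and> cont_bdd T (dx b) \<and> cont_bdd T (dxx b) \<and>
     cont_bdd T \<sigma> \<and> cont_bdd T (dx \<sigma>) \<and> cont_bdd T (dxx \<sigma>) \<and>
     (\<exists>\<gamma>. 0 < \<gamma> \<and> \<gamma> \<le> 1 \<and>
        loc_hoelder_par T \<gamma> (dx b) \<and> loc_hoelder_par T \<gamma> (dxx b) \<and>
        loc_hoelder_par T \<gamma> (dx \<sigma>) \<and> loc_hoelder_par T \<gamma> (dxx \<sigma>)) \<and>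
     half_hoelder_time T b \<and> half_hoelder_time T \<sigma> \<and>
     (\<exists>\<delta>>0. \<forall>t\<in>{0..T}. \<forall>x. \<sigma> t x \<ge> \<delta>)"

text \<open>Euler scheme with Rademacher increments e :: nat => real (e j = epsilon_j),
  step h = T/n, t_j = j*h. Xsch T b sigma n k x e m = X^{n,t_k,x}_{t_m} for m >= k
  (and = x for m <= k).\<close>
primrec Xsch :: "real \<Rightarrow> (real \<Rightarrow> real \<Rightarrow> real) \<Rightarrow> (real \<Rightarrow> real \<Rightarrow> real) \<Rightarrow> nat \<Rightarrow> nat
     \<Rightarrow> real \<Rightarrow> (nat \<Rightarrow> real) \<Rightarrow> nat \<Rightarrow> real" where
  "Xsch T b \<sigma> n k x e 0 = x"
| "Xsch T b \<sigma> n k x e (Suc m) =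
     (if Suc m \<le> k then x else
        Xsch T b \<sigma> n k x e m
        + (T / n) * b (real (Suc m) * (T / n)) (Xsch T b \<sigma> n k x e m)
        + sqrt (T / n) * \<sigma> (real (Suc m) * (T / n)) (Xsch T b \<sigma> n k x e m) * e (Suc m))"

text \<open>Discrete derivative process nabla X^{n,t_k,x}_{t_m}; the recursion
  G_m = G_{m-1} + h b_x(t_m, X_{m-1}) G_{m-1} + sqrt h sigma_x(t_m, X_{m-1}) G_{m-1} eps_m,
  G_k = 1, is exactly the summed formula of the paper.\<close>
primrec gradX :: "real \<Rightarrow> (real \<Rightarrow> real \<Rightarrow> real) \<Rightarrow> (real \<Rightarrow> real \<Rightarrow> real) \<Rightarrow> nat \<Rightarrow> nat
     \<Rightarrow> real \<Rightarrow> (nat \<Rightarrow> real) \<Rightarrow> nat \<Rightarrow> real" where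
  "gradX T b \<sigma> n k x e 0 = 1"
| "gradX T b \<sigma> n k x e (Suc m) =
     (if Suc m \<le> k then 1 else
        gradX T b \<sigma> n k x e m
        + (T / n) * dx b (real (Suc m) * (T / n)) (Xsch T b \<sigma> n k x e m) * gradX T b \<sigma> n k x e m
        + sqrt (T / n) * dx \<sigma> (real (Suc m) * (T / n)) (Xsch T b \<sigma> n k x e m)
            * gradX T b \<sigma> n k x e m * e (Suc m))"

definition Erad :: "nat \<Rightarrow> ((nat \<Rightarrow> real) \<Rightarrow> real) \<Rightarrow> real" where
  "Erad n F = (\<Sum>e\<in>PiE {1..n} (\<lambda>_. {-1, 1}). F e) / 2 ^ n"

definition Tshift :: "nat \<Rightarrow> real \<Rightarrow> ((nat \<Rightarrow> real) \<Rightarrow> real) \<Rightarrow> (nat \<Rightarrow> real) \<Rightarrow> real" where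
  "Tshift m s F e = F (e(m := s))"

definition Dn :: "real \<Rightarrow> nat \<Rightarrow> nat \<Rightarrow> ((nat \<Rightarrow> real) \<Rightarrow> real) \<Rightarrow> (nat \<Rightarrow> real) \<Rightarrow> real" where
  "Dn T n m F e = (Tshift m 1 F e - Tshift m (-1) F e) / (2 * sqrt (T / n))"

end

theory Submission
  imports Defs
begin


lemma taylor2:
  fixes p t :: real assumes p: "p \<ge> 2" and t: "\<bar>t\<bar> \<le> 1/2"
  shows "(1+t) powr p \<le> 1 + p*t + (p*(p-1)*(3/2) powr (p-2)/2) * t^2"
proof (cases "t = 0")
  case True then show ?thesis by simp
next
  case False
  define diff where "diff = (\<lambda>m::nat. \<lambda>x::real. (\<Prod>i<m. (p - real i)) * (1+x) powr (p - real m))"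
  have d0: "diff 0 = (\<lambda>x. (1+x) powr p)" by (simp add: diff_def)
  have der: "\<forall>m x. m < 2 \<and> -1/2 \<le> x \<and> x \<le> 1/2 \<longrightarrow> DERIV (diff m) x :> diff (Suc m) x"
  proof (intro allI impI)
    fix m :: nat and x :: real assume a: "m < 2 \<and> -1/2 \<le> x \<and> x \<le> 1/2"
    then have pos: "1 + x > 0" by simp
    have "DERIV (\<lambda>x. (1+x) powr (p - real m)) x :> (p - real m) * (1+x) powr (p - real m - of_nat 1) * 1"
      by (rule DERIV_fun_powr) (auto intro!: derivative_eq_intros simp: pos)
    then have "DERIV (\<lambda>x. (\<Prod>i<m. (p - real i)) * (1+x) powr (p - real m)) x :> (\<Prod>i<m. (p - real i)) * ((p - real m) * (1+x) powr (p - real m - of_nat 1) * 1)"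
      by (rule DERIV_cmult)
    then show "DERIV (diff m) x :> diff (Suc m) x"
      unfolding diff_def by (simp add: algebra_simps diff_diff_eq)
  qed
  have tb: "-1/2 \<le> t" "t \<le> 1/2" using t by auto
  obtain \<xi> where xi: "(if t < 0 then t < \<xi> \<and> \<xi> < 0 else 0 < \<xi> \<and> \<xi> < t)"
    and eq: "(1+t) powr p = (\<Sum>m<2. (diff m 0 / fact m) * (t - 0)^m) + (diff 2 \<xi> / fact 2) * (t - 0)^2"
    using Taylor[OF _ d0 der _ _ tb False] by auto
  have xib: "\<bar>\<xi>\<bar> \<le> 1/2" using xi t by (auto split: if_splits)
  have "diff 2 \<xi> = p*(p-1) * (1+\<xi>) powr (p-2)" by (simp add: diff_def numeral_2_eq_2 lessThan_Suc)
  also have "\<dots> \<le> p*(p-1) * (3/2) powr (p-2)"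
    using p xib by (intro mult_left_mono powr_mono2) auto
  finally have "diff 2 \<xi> / fact 2 * t^2 \<le> p*(p-1) * (3/2) powr (p-2) / 2 * t^2"
    by (intro mult_right_mono) (auto simp: fact_numeral)
  moreover have "(\<Sum>m<2. (diff m 0 / fact m) * (t - 0)^m) = 1 + p*t"
    by (simp add: diff_def numeral_2_eq_2 lessThan_Suc)
  ultimately show ?thesis using eq by simp
qed



definition Cs :: "real \<Rightarrow> real" where "Cs p = 3 powr p + p*(p-1)*(3/2) powr (p-2)/2"

lemma Cs_nonneg: "p \<ge> 2 \<Longrightarrow> Cs p \<ge> 0"
  unfolding Cs_def by (intro add_nonneg_nonneg divide_nonneg_nonneg mult_nonneg_nonneg) auto

lemma ineqS:
  fixes p y w :: real assumes p: "p \<ge> 2"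
  shows "(\<bar>y+w\<bar> powr p + \<bar>y-w\<bar> powr p)/2 \<le> \<bar>y\<bar> powr p + Cs p * (\<bar>y\<bar> powr (p-2) * w^2 + \<bar>w\<bar> powr p)"
proof (cases "\<bar>y\<bar> \<le> 2*\<bar>w\<bar>")
  case True
  have "\<bar>y+w\<bar> powr p \<le> (3*\<bar>w\<bar>) powr p" using True p by (intro powr_mono2) auto
  moreover have "\<bar>y-w\<bar> powr p \<le> (3*\<bar>w\<bar>) powr p" using True p by (intro powr_mono2) auto
  ultimately have "(\<bar>y+w\<bar> powr p + \<bar>y-w\<bar> powr p)/2 \<le> 3 powr p * \<bar>w\<bar> powr p"
    by (simp add: powr_mult)
  also have "\<dots> \<le> Cs p * \<bar>w\<bar> powr p"
    unfolding Cs_def using p by (intro mult_right_mono) auto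
  also have "\<dots> \<le> \<bar>y\<bar> powr p + Cs p * (\<bar>y\<bar> powr (p-2) * w^2 + \<bar>w\<bar> powr p)"
    using Cs_nonneg[OF p] by (simp add: distrib_left)
  finally show ?thesis .
next
  case False
  then have y0: "y \<noteq> 0" by auto
  define t where "t = w / y"
  have tb: "\<bar>t\<bar> \<le> 1/2"
  proof -
    have "\<bar>t\<bar> = \<bar>w\<bar>/\<bar>y\<bar>" by (simp add: t_def abs_divide)
    moreover have "\<bar>w\<bar> \<le> 1/2 * \<bar>y\<bar>" using False by simp
    ultimately show ?thesis using y0 by (simp add: divide_le_eq)
  qed
  have w: "w = t * y" using y0 by (simp add: t_def)
  have e1: "\<bar>y+w\<bar> = \<bar>y\<bar> * (1+t)"
  proof -
    have "y + w = y * (1+t)" unfolding w by (simp add: algebra_simps)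
    then show ?thesis using tb by (simp add: abs_mult)
  qed
  have e2: "\<bar>y-w\<bar> = \<bar>y\<bar> * (1+(-t))"
  proof -
    have "y - w = y * (1+(-t))" unfolding w by (simp add: algebra_simps)
    then show ?thesis using tb by (simp add: abs_mult)
  qed
  define C0 where "C0 = p*(p-1)*(3/2) powr (p-2)/2"
  have C0: "C0 \<le> Cs p" unfolding Cs_def C0_def by simp
  have t1: "(1+t) powr p \<le> 1 + p*t + C0 * t^2" unfolding C0_def by (rule taylor2[OF p tb])
  have t2: "(1+(-t)) powr p \<le> 1 + p*(-t) + C0 * (-t)^2" unfolding C0_def by (rule taylor2[OF p]) (use tb in auto)
  have yp: "\<bar>y\<bar> powr p = \<bar>y\<bar> powr (p-2) * y^2"
  proof -
    have "\<bar>y\<bar> powr (p-2) * \<bar>y\<bar> powr 2 = \<bar>y\<bar> powr p" by (subst powr_add[symmetric]) simp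
    moreover have "\<bar>y\<bar> powr 2 = y^2" using y0 by (simp add: powr_numeral)
    ultimately show ?thesis by simp
  qed
  have "(\<bar>y+w\<bar> powr p + \<bar>y-w\<bar> powr p)/2 = \<bar>y\<bar> powr p * (((1+t) powr p + (1+(-t)) powr p)/2)"
  proof -
    have m1: "(\<bar>y\<bar>*(1+t)) powr p = \<bar>y\<bar> powr p * (1+t) powr p" using tb by (simp add: powr_mult)
    have m2: "(\<bar>y\<bar>*(1+(-t))) powr p = \<bar>y\<bar> powr p * (1+(-t)) powr p" using tb by (simp add: powr_mult)
    have a1: "\<bar>y+w\<bar> powr p = \<bar>y\<bar> powr p * (1+t) powr p" using e1 m1 by simp
    have a2: "\<bar>y-w\<bar> powr p = \<bar>y\<bar> powr p * (1+(-t)) powr p" using e2 m2 by simp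
    show ?thesis unfolding a1 a2 by (simp add: algebra_simps add_divide_distrib)
  qed
  also have "\<dots> \<le> \<bar>y\<bar> powr p * (1 + C0 * t^2)"
    using t1 t2 by (intro mult_left_mono) auto
  also have "\<dots> = \<bar>y\<bar> powr p + C0 * (\<bar>y\<bar> powr (p-2) * w^2)"
    unfolding yp w by (simp add: power_mult_distrib algebra_simps)
  also have "\<dots> \<le> \<bar>y\<bar> powr p + Cs p * (\<bar>y\<bar> powr (p-2) * w^2 + \<bar>w\<bar> powr p)"
    using C0 Cs_nonneg[OF p] by (intro add_left_mono mult_mono) auto
  finally show ?thesis .
qed

lemma young0:
  fixes x y p :: real assumes "x \<ge> 0" "y \<ge> 0" "p \<ge> 2"
  shows "x powr (p-2) * y^2 \<le> x powr p + y powr p"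
proof (cases "x \<le> y")
  case True
  have "x powr (p-2) * y^2 \<le> y powr (p-2) * y^2"
    using assms True by (intro mult_right_mono powr_mono2) auto
  also have "\<dots> \<le> y powr p"
  proof (cases "y = 0")
    case False
    then have "y^2 = y powr 2" using assms by (simp add: powr_numeral)
    then have "y powr (p-2) * y^2 = y powr p" by (simp add: powr_add[symmetric])
    then show ?thesis by simp
  qed (use assms in simp)
  finally show ?thesis using assms by (smt (verit) powr_ge_zero)
next
  case False
  have "x powr (p-2) * y^2 \<le> x powr (p-2) * x^2"
    using assms False by (intro mult_left_mono power_mono) auto
  also have "\<dots> \<le> x powr p"
  proof -
    have "x > 0" using assms False by auto
    then have "x^2 = x powr 2" by (simp add: powr_numeral)
    then have "x powr (p-2) * x^2 = x powr p" by (simp add: powr_add[symmetric])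
    then show ?thesis by simp
  qed
  finally show ?thesis using assms by (smt (verit) powr_ge_zero)
qed

lemma sum_powr_le:
  fixes x y p :: real assumes "x \<ge> 0" "y \<ge> 0" "p \<ge> 0"
  shows "(x + y) powr p \<le> 2 powr p * (x powr p + y powr p)"
proof -
  have "(x+y) powr p \<le> (2 * max x y) powr p" using assms by (intro powr_mono2) auto
  also have "\<dots> = 2 powr p * max x y powr p" using assms by (simp add: powr_mult)
  also have "\<dots> \<le> 2 powr p * (x powr p + y powr p)"
    by (intro mult_left_mono) (auto simp: max_def)
  finally show ?thesis .
qed

lemma powr_mvt:
  fixes a b p :: real assumes "a \<ge> 0" "b \<ge> 0" "p \<ge> 1"
  shows "(a + b) powr p \<le> a powr p + p * b * (a+b) powr (p-1)"
proof (cases "b = 0")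
  case True then show ?thesis by simp
next
  case b: False
  show ?thesis
  proof (cases "a = 0")
    case True
    have "b powr p = b * b powr (p-1)" using b assms by (simp add: powr_mult_base)
    also have "\<dots> \<le> p * b * b powr (p-1)"
    proof (intro mult_right_mono)
      show "b \<le> p * b" using mult_right_mono[of 1 p b] assms by simp
    qed simp
    finally show ?thesis using True by simp
  next
    case False
    then have a0: "a > 0" using assms by auto
    have "\<exists>z. a < z \<and> z < a + b \<and> (a+b) powr p - a powr p = ((a+b) - a) * (p * z powr (p-1))"
      using b assms a0 by (intro MVT2) (auto intro!: has_real_derivative_powr)
    then obtain z where z: "a < z" "z < a+b" "(a+b) powr p - a powr p = b * (p * z powr (p-1))" by auto
    have "z powr (p-1) \<le> (a+b) powr (p-1)" using z assms a0 by (intro powr_mono2) auto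
    then have "b * (p * z powr (p-1)) \<le> b * (p * (a+b) powr (p-1))"
      using assms b by (intro mult_left_mono) auto
    then show ?thesis using z by (simp add: algebra_simps)
  qed
qed



lemma young1:
  fixes x y p :: real assumes "x \<ge> 0" "y \<ge> 0" "p \<ge> 1"
  shows "x powr (p-1) * y \<le> x powr p + y powr p"
proof (cases "x \<le> y")
  case True
  have "x powr (p-1) * y \<le> y powr (p-1) * y"
    using assms True by (intro mult_right_mono powr_mono2) auto
  also have "\<dots> \<le> y powr p"
  proof (cases "y = 0")
    case False
    then have "y powr (p-1) * y powr 1 = y powr p" by (subst powr_add[symmetric]) simp
    then show ?thesis using False assms by simp
  qed (use assms in simp)
  finally show ?thesis using assms by (smt (verit) powr_ge_zero)
next
  case False
  have "x powr (p-1) * y \<le> x powr (p-1) * x"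
    using assms False by (intro mult_left_mono) auto
  also have "\<dots> \<le> x powr p"
  proof -
    have "x > 0" using assms False by auto
    then have "x powr (p-1) * x powr 1 = x powr p" by (subst powr_add[symmetric]) simp
    then show ?thesis using \<open>x > 0\<close> by simp
  qed
  finally show ?thesis using assms by (smt (verit) powr_ge_zero)
qed

lemma exp_powr_eq: "exp (x::real) powr r = exp (r * x)"
  by (simp add: powr_def ln_exp)

lemma PL:
  fixes r T L :: real assumes r: "r \<ge> 2" and T: "T > 0" and L: "L \<ge> 0"
  shows "\<exists>K>0. \<forall>h \<epsilon> d y w. 0 < h \<and> h \<le> T \<and> \<epsilon> \<ge> 0 \<and> d \<ge> 0 \<and>
      \<bar>y\<bar> \<le> \<epsilon>*(1+h*L) + h*d \<and> \<bar>w\<bar> \<le> sqrt h * (\<epsilon>*L + d) \<longrightarrow>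
      (\<bar>y+w\<bar> powr r + \<bar>y-w\<bar> powr r)/2 \<le> exp (K*h) * \<epsilon> powr r + K*h * d powr r"
proof -
  define C where "C = Cs r"
  define T' where "T' = T powr (r/2 - 1)"
  define c1 where "c1 = (1+T*L) powr r"
  define c2 where "c2 = T powr r"
  define Lr where "Lr = L powr r"
  define tw where "tw = (2::real) powr r"
  define K1 where "K1 = (r + C) * tw * c1 + (C + C*T') * tw * Lr"
  define K2 where "K2 = (r + C) * tw * c2 + r + (C + C*T') * tw"
  define K where "K = r*L + K1 + K2 + 1"
  have C0: "C \<ge> 0" unfolding C_def using Cs_nonneg r by auto
  have pos: "T' \<ge> 0" "c1 \<ge> 0" "c2 \<ge> 0" "Lr \<ge> 0" "tw \<ge> 0"
    unfolding T'_def c1_def c2_def Lr_def tw_def by auto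
  have K1: "K1 \<ge> 0" unfolding K1_def using pos C0 r by (intro add_nonneg_nonneg mult_nonneg_nonneg) auto
  have K2: "K2 \<ge> 0" unfolding K2_def using pos C0 r by (intro add_nonneg_nonneg mult_nonneg_nonneg) auto
  have Kpos: "K > 0" proof -
    have "r*L \<ge> 0" using r L by simp
    then show ?thesis unfolding K_def using K1 K2 by linarith
  qed
  show ?thesis
  proof (intro exI[of _ K] conjI allI impI Kpos)
    fix h \<epsilon> d y w :: real
    assume a: "0 < h \<and> h \<le> T \<and> \<epsilon> \<ge> 0 \<and> d \<ge> 0 \<and>
      \<bar>y\<bar> \<le> \<epsilon>*(1+h*L) + h*d \<and> \<bar>w\<bar> \<le> sqrt h * (\<epsilon>*L + d)"
    then have h: "0 < h" "h \<le> T" and e: "\<epsilon> \<ge> 0" and d: "d \<ge> 0"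
      and y: "\<bar>y\<bar> \<le> \<epsilon>*(1+h*L) + h*d" and w: "\<bar>w\<bar> \<le> sqrt h * (\<epsilon>*L + d)" by auto
    define A where "A = \<epsilon>*(1+h*L) + h*d"
    define Ab where "Ab = \<epsilon>*(1+T*L) + T*d"
    define B0 where "B0 = \<epsilon>*L + d"
    define X where "X = \<epsilon> powr r"
    define D where "D = d powr r"
    define PA where "PA = Ab powr r"
    define PB where "PB = B0 powr r"
    define E0 where "E0 = exp (r*L*h)"
    have A0: "A \<ge> 0" unfolding A_def using h e d L by auto
    have B00: "B0 \<ge> 0" unfolding B0_def using e d L by auto
    have AAb: "A \<le> Ab" unfolding A_def Ab_def using h e d L
      by (intro add_mono mult_left_mono mult_right_mono) auto
    have X0: "X \<ge> 0" "D \<ge> 0" "PA \<ge> 0" "PB \<ge> 0" unfolding X_def D_def PA_def PB_def by auto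
    have S: "(\<bar>y+w\<bar> powr r + \<bar>y-w\<bar> powr r)/2 \<le> \<bar>y\<bar> powr r + C * (\<bar>y\<bar> powr (r-2) * w^2 + \<bar>w\<bar> powr r)"
      unfolding C_def by (rule ineqS[OF r])
    have y1: "\<bar>y\<bar> powr r \<le> A powr r" using y r unfolding A_def by (intro powr_mono2) auto
    have w2: "w^2 \<le> h * B0^2"
    proof -
      have "w^2 = \<bar>w\<bar>^2" by simp
      also have "\<dots> \<le> (sqrt h * B0)^2" using w unfolding B0_def by (intro power_mono) auto
      also have "\<dots> = h * B0^2" using h by (simp add: power_mult_distrib)
      finally show ?thesis .
    qed
    have y2: "\<bar>y\<bar> powr (r-2) * w^2 \<le> h * (PA + PB)"
    proof -
      have "\<bar>y\<bar> powr (r-2) * w^2 \<le> A powr (r-2) * (h * B0^2)"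
        using y w2 r unfolding A_def by (intro mult_mono powr_mono2) auto
      also have "\<dots> = h * (A powr (r-2) * B0^2)" by simp
      also have "\<dots> \<le> h * (A powr r + B0 powr r)"
        using h A0 B00 r by (intro mult_left_mono young0) auto
      also have "\<dots> \<le> h * (PA + PB)"
        unfolding PA_def PB_def using h A0 AAb r B00 by (intro mult_left_mono add_mono powr_mono2) auto
      finally show ?thesis .
    qed
    have w3: "\<bar>w\<bar> powr r \<le> h * T' * PB"
    proof -
      have "\<bar>w\<bar> powr r \<le> (sqrt h * B0) powr r" using w r unfolding B0_def by (intro powr_mono2) auto
      also have "\<dots> = sqrt h powr r * PB" unfolding PB_def using h B00 by (simp add: powr_mult)
      also have "sqrt h powr r = h powr (r/2)"
        using h by (simp add: powr_half_sqrt[symmetric] powr_powr)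
      also have "h powr (r/2) = h * h powr (r/2 - 1)"
      proof -
        have "h powr 1 * h powr (r/2-1) = h powr (1 + (r/2-1))" by (rule powr_add[symmetric])
        then show ?thesis using h by simp
      qed
      also have "h powr (r/2-1) \<le> T'" unfolding T'_def using h r by (intro powr_mono2) auto
      then have "h * h powr (r/2 - 1) * PB \<le> h * T' * PB"
        using h X0 by (intro mult_right_mono mult_left_mono) auto
      finally show ?thesis by simp
    qed
    have A1: "A powr r \<le> X * E0 + r * h * (PA + D)"
    proof -
      have "A powr r \<le> (\<epsilon>*(1+h*L)) powr r + r * (h*d) * (\<epsilon>*(1+h*L) + h*d) powr (r-1)"
        unfolding A_def using powr_mvt[of "\<epsilon>*(1+h*L)" "h*d" r] h e d L r by auto
      also have "(\<epsilon>*(1+h*L)) powr r = X * (1+h*L) powr r"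
        unfolding X_def using e h L by (simp add: powr_mult)
      also have "(1+h*L) powr r \<le> exp (h*L) powr r"
        using h L r by (intro powr_mono2) auto
      also have "exp (h*L) powr r = E0" unfolding E0_def exp_powr_eq by (simp add: algebra_simps)
      also have "(\<epsilon>*(1+h*L) + h*d) powr (r-1) \<le> Ab powr (r-1)"
        using AAb A0 r unfolding A_def by (intro powr_mono2) auto
      then have "r * (h*d) * (\<epsilon>*(1+h*L) + h*d) powr (r-1) \<le> r * h * (Ab powr (r-1) * d)"
      proof -
        have "(r*h*d) * (\<epsilon>*(1+h*L) + h*d) powr (r-1) \<le> (r*h*d) * Ab powr (r-1)"
          using r h d \<open>(\<epsilon>*(1+h*L) + h*d) powr (r-1) \<le> Ab powr (r-1)\<close> by (intro mult_left_mono) auto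
        then show ?thesis by (simp add: algebra_simps)
      qed
      also have "Ab powr (r-1) * d \<le> PA + D" unfolding PA_def D_def
        using young1[of Ab d r] AAb A0 d r by auto
      then have "r * h * (Ab powr (r-1) * d) \<le> r * h * (PA + D)"
        using r h by (intro mult_left_mono) auto
      finally show ?thesis using X0 by (simp add: mult_left_mono)
    qed
    have PA: "PA \<le> tw * (c1 * X + c2 * D)"
    proof -
      have "PA \<le> tw * ((\<epsilon>*(1+T*L)) powr r + (T*d) powr r)"
        unfolding PA_def Ab_def tw_def using sum_powr_le[of "\<epsilon>*(1+T*L)" "T*d" r] e d T L r by auto
      also have "(\<epsilon>*(1+T*L)) powr r = c1 * X" unfolding c1_def X_def using e T L by (simp add: powr_mult)
      also have "(T*d) powr r = c2 * D" unfolding c2_def D_def using d T by (simp add: powr_mult)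
      finally show ?thesis .
    qed
    have PB: "PB \<le> tw * (Lr * X + D)"
    proof -
      have "PB \<le> tw * ((\<epsilon>*L) powr r + d powr r)"
        unfolding PB_def B0_def tw_def using sum_powr_le[of "\<epsilon>*L" d r] e d L r by auto
      also have "(\<epsilon>*L) powr r = Lr * X" unfolding Lr_def X_def using e L by (simp add: powr_mult)
      finally show ?thesis unfolding D_def .
    qed
    have main: "(\<bar>y+w\<bar> powr r + \<bar>y-w\<bar> powr r)/2 \<le> X * E0 + h * ((r + C) * PA + r * D + (C + C*T') * PB)"
    proof -
      have "C * (\<bar>y\<bar> powr (r-2) * w^2 + \<bar>w\<bar> powr r) \<le> C * (h * (PA + PB) + h * T' * PB)"
        using C0 y2 w3 by (intro mult_left_mono add_mono) auto
      then show ?thesis using S y1 A1 by (simp add: algebra_simps)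
    qed
    have inner: "(r + C) * PA + r * D + (C + C*T') * PB \<le> K1 * X + K2 * D"
    proof -
      have "(r + C) * PA \<le> (r + C) * (tw * (c1 * X + c2 * D))" using PA r C0 by (intro mult_left_mono) auto
      moreover have "(C + C*T') * PB \<le> (C + C*T') * (tw * (Lr * X + D))"
        using PB C0 pos by (intro mult_left_mono) auto
      ultimately show ?thesis unfolding K1_def K2_def by (simp add: algebra_simps)
    qed
    have "(\<bar>y+w\<bar> powr r + \<bar>y-w\<bar> powr r)/2 \<le> X * E0 + h * (K1 * X + K2 * D)"
      using main inner h by (smt (verit) mult_left_mono)
    also have "\<dots> = X * (E0 + h*K1) + h * K2 * D" by (simp add: algebra_simps)
    also have "E0 + h*K1 \<le> exp (K*h)"
    proof -
      have "E0 \<ge> 1" unfolding E0_def using h r L by simp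
      then have "1 * (h*K1) \<le> E0 * (h*K1)" using h K1 by (intro mult_right_mono) auto
      then have "E0 + h*K1 \<le> E0 * (1 + h*K1)" by (simp add: algebra_simps)
      also have "\<dots> \<le> E0 * exp (h*K1)" unfolding E0_def by (intro mult_left_mono) auto
      also have "\<dots> = exp ((r*L + K1)*h)" unfolding E0_def by (simp add: exp_add[symmetric] algebra_simps)
      also have "\<dots> \<le> exp (K*h)" unfolding K_def using h K2 by (intro exp_mono mult_right_mono) auto
      finally show ?thesis .
    qed
    then have "X * (E0 + h*K1) \<le> X * exp (K*h)" using X0 by (intro mult_left_mono) auto
    then have "X * (E0 + h*K1) + h * K2 * D \<le> exp (K*h) * X + K * h * D"
    proof -
      have "h * K2 * D \<le> K * h * D" unfolding K_def using h X0 K1 K2 r L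
        by (intro mult_right_mono) auto
      then show ?thesis using \<open>X * (E0 + h*K1) \<le> X * exp (K*h)\<close> by (simp add: mult.commute)
    qed
    finally show "(\<bar>y+w\<bar> powr r + \<bar>y-w\<bar> powr r)/2 \<le> exp (K*h) * \<epsilon> powr r + K*h * d powr r"
      unfolding X_def D_def .
  qed
qed



definition Pn :: "nat \<Rightarrow> (nat \<Rightarrow> real) set" where
  "Pn n = PiE {1..n} (\<lambda>_. {-1, 1})"

lemma Pn_finite: "finite (Pn n)" unfolding Pn_def by (intro finite_PiE) auto

lemma Pn_card: "card (Pn n) = 2^n" unfolding Pn_def by (simp add: card_PiE numeral_2_eq_2)

lemma Erad_alt: "Erad n F = (\<Sum>e\<in>Pn n. F e) / 2^n" unfolding Erad_def Pn_def ..

lemma Pn_upd: "e \<in> Pn n \<Longrightarrow> j \<in> {1..n} \<Longrightarrow> s \<in> {-1,1} \<Longrightarrow> e(j:=s) \<in> Pn n"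
  unfolding Pn_def by (auto simp: PiE_iff extensional_def)

lemma Pn_val: "e \<in> Pn n \<Longrightarrow> j \<in> {1..n} \<Longrightarrow> e j = 1 \<or> e j = -1"
  unfolding Pn_def by (auto simp: PiE_iff)

lemma Erad_mono: "(\<And>e. e \<in> Pn n \<Longrightarrow> F e \<le> G e) \<Longrightarrow> Erad n F \<le> Erad n G"
  unfolding Erad_alt by (intro divide_right_mono sum_mono) auto

lemma Erad_cong: "(\<And>e. e \<in> Pn n \<Longrightarrow> F e = G e) \<Longrightarrow> Erad n F = Erad n G"
  unfolding Erad_alt by (intro arg_cong2[where f="(/)"] sum.cong) auto

lemma Erad_nonneg: "(\<And>e. e \<in> Pn n \<Longrightarrow> F e \<ge> 0) \<Longrightarrow> Erad n F \<ge> 0"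
  unfolding Erad_alt by (intro divide_nonneg_nonneg sum_nonneg) auto

lemma Erad_const: "Erad n (\<lambda>_. c) = c"
  unfolding Erad_alt by (simp add: Pn_card)

lemma Erad_lin: "Erad n (\<lambda>e. A * F e + B * G e) = A * Erad n F + B * Erad n G"
  unfolding Erad_alt by (simp add: sum.distrib sum_distrib_left[symmetric] add_divide_distrib)

lemma Erad_scale: "Erad n (\<lambda>e. A * F e) = A * Erad n F"
  using Erad_lin[of n A F 0 F] by simp

lemma Erad_avg:
  assumes j: "j \<in> {1..n}"
  shows "Erad n F = Erad n (\<lambda>e. (F (e(j:=1)) + F (e(j:=-1)))/2)"
proof -
  define P1 where "P1 = {e\<in>Pn n. e j = 1}"
  define P2 where "P2 = {e\<in>Pn n. e j = -1}"
  have fin: "finite P1" "finite P2" unfolding P1_def P2_def using Pn_finite by auto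
  have un: "Pn n = P1 \<union> P2" unfolding P1_def P2_def using Pn_val[OF _ j] by auto
  have dis: "P1 \<inter> P2 = {}" unfolding P1_def P2_def by auto
  have b12: "bij_betw (\<lambda>e. e(j:=1)) P2 P1"
    by (rule bij_betw_byWitness[where f'="\<lambda>e. e(j:=-1)"])
       (auto simp: P1_def P2_def intro: Pn_upd[OF _ j] fun_upd_triv[symmetric])
  have b21: "bij_betw (\<lambda>e. e(j:=-1)) P1 P2"
    by (rule bij_betw_byWitness[where f'="\<lambda>e. e(j:=1)"])
       (auto simp: P1_def P2_def intro: Pn_upd[OF _ j] fun_upd_triv[symmetric])
  have s1: "(\<Sum>e\<in>Pn n. F (e(j:=1))) = 2 * (\<Sum>e\<in>P1. F e)"
  proof -
    have "(\<Sum>e\<in>Pn n. F (e(j:=1))) = (\<Sum>e\<in>P1. F (e(j:=1))) + (\<Sum>e\<in>P2. F (e(j:=1)))"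
      unfolding un using fin dis by (rule sum.union_disjoint)
    also have "(\<Sum>e\<in>P1. F (e(j:=1))) = (\<Sum>e\<in>P1. F e)"
      by (intro sum.cong) (auto simp: P1_def fun_upd_idem)
    also have "(\<Sum>e\<in>P2. F (e(j:=1))) = (\<Sum>e\<in>P1. F e)"
      using sum.reindex_bij_betw[OF b12, of F] .
    finally show ?thesis by (simp only: mult_2)
  qed
  have s2: "(\<Sum>e\<in>Pn n. F (e(j:=-1))) = 2 * (\<Sum>e\<in>P2. F e)"
  proof -
    have "(\<Sum>e\<in>Pn n. F (e(j:=-1))) = (\<Sum>e\<in>P1. F (e(j:=-1))) + (\<Sum>e\<in>P2. F (e(j:=-1)))"
      unfolding un using fin dis by (rule sum.union_disjoint)
    also have "(\<Sum>e\<in>P2. F (e(j:=-1))) = (\<Sum>e\<in>P2. F e)"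
      by (intro sum.cong) (auto simp: P2_def fun_upd_idem)
    also have "(\<Sum>e\<in>P1. F (e(j:=-1))) = (\<Sum>e\<in>P2. F e)"
      using sum.reindex_bij_betw[OF b21, of F] .
    finally show ?thesis by (simp only: mult_2)
  qed
  have "(\<Sum>e\<in>Pn n. (F (e(j:=1)) + F (e(j:=-1)))/2) = (\<Sum>e\<in>Pn n. F e)"
    unfolding sum_divide_distrib[symmetric] sum.distrib s1 s2
    unfolding un using fin dis by (simp add: sum.union_disjoint)
  then show ?thesis unfolding Erad_alt by simp
qed



lemma GL_step:
  fixes n j :: nat and r K D T L :: real and Z c a \<alpha> \<beta> d :: "(nat\<Rightarrow>real) \<Rightarrow> nat \<Rightarrow> real"
  defines "h \<equiv> T / real n"
  assumes T: "T > 0" and n: "n \<ge> 1" and L: "L \<ge> 0"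
    and PLK: "\<forall>h \<epsilon> d y w. 0 < h \<and> h \<le> T \<and> \<epsilon> \<ge> 0 \<and> d \<ge> 0 \<and>
      \<bar>y\<bar> \<le> \<epsilon>*(1+h*L) + h*d \<and> \<bar>w\<bar> \<le> sqrt h * (\<epsilon>*L + d) \<longrightarrow>
      (\<bar>y+w\<bar> powr r + \<bar>y-w\<bar> powr r)/2 \<le> exp (K*h) * \<epsilon> powr r + K*h * d powr r"
    and j: "1 \<le> j" "j \<le> n"
    and rec: "\<forall>e\<in>Pn n. Z e j = Z e (j-1) * (1 + h * c e j + sqrt h * a e j * e j) + h * \<alpha> e j + sqrt h * \<beta> e j * e j"
    and inv: "\<forall>e\<in>Pn n. \<forall>s\<in>{-1,1}. Z (e(j:=s)) (j-1) = Z e (j-1) \<and> c (e(j:=s)) j = c e j \<and>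
        a (e(j:=s)) j = a e j \<and> \<alpha> (e(j:=s)) j = \<alpha> e j \<and> \<beta> (e(j:=s)) j = \<beta> e j \<and> d (e(j:=s)) j = d e j"
    and bnd: "\<forall>e\<in>Pn n. \<bar>c e j\<bar> \<le> L \<and> \<bar>a e j\<bar> \<le> L \<and> \<bar>\<alpha> e j\<bar> \<le> d e j \<and> \<bar>\<beta> e j\<bar> \<le> d e j"
  shows "Erad n (\<lambda>e. \<bar>Z e j\<bar> powr r) \<le> exp (K*h) * Erad n (\<lambda>e. \<bar>Z e (j-1)\<bar> powr r) + K*h * Erad n (\<lambda>e. d e j powr r)"
proof -
  have h: "0 < h" "h \<le> T" unfolding h_def using T n by (auto simp: field_simps)
  have jj: "j \<in> {1..n}" using j by auto
  define Y where "Y = (\<lambda>e. Z e (j-1) * (1 + h * c e j) + h * \<alpha> e j)"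
  define W where "W = (\<lambda>e. sqrt h * (Z e (j-1) * a e j + \<beta> e j))"
  have key: "\<bar>Z (e(j:=s)) j\<bar> powr r = \<bar>Y e + s * W e\<bar> powr r" if e: "e \<in> Pn n" and s: "s \<in> {-1,1}" for e s
  proof -
    have e': "e(j:=s) \<in> Pn n" using Pn_upd[OF e jj s] .
    from inv[rule_format, OF e s] have i: "Z (e(j:=s)) (j-1) = Z e (j-1)" "c (e(j:=s)) j = c e j"
      "a (e(j:=s)) j = a e j" "\<alpha> (e(j:=s)) j = \<alpha> e j" "\<beta> (e(j:=s)) j = \<beta> e j" by auto
    have es: "(e(j:=s)) j = s" by simp
    have "Z (e(j:=s)) j = Z (e(j:=s)) (j-1) * (1 + h * c (e(j:=s)) j + sqrt h * a (e(j:=s)) j * (e(j:=s)) j)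
       + h * \<alpha> (e(j:=s)) j + sqrt h * \<beta> (e(j:=s)) j * (e(j:=s)) j"
      by (rule bspec[OF rec e'])
    then have "Z (e(j:=s)) j = Z e (j-1) * (1 + h * c e j + sqrt h * a e j * s) + h * \<alpha> e j + sqrt h * \<beta> e j * s"
      unfolding i es .
    also have "\<dots> = Y e + s * W e" unfolding Y_def W_def by (simp add: algebra_simps)
    finally show ?thesis by simp
  qed
  have pt: "(\<bar>Z (e(j:=1)) j\<bar> powr r + \<bar>Z (e(j:=-1)) j\<bar> powr r)/2
      \<le> exp (K*h) * \<bar>Z e (j-1)\<bar> powr r + K*h * d e j powr r" if e: "e \<in> Pn n" for e
  proof -
    have b: "\<bar>c e j\<bar> \<le> L" "\<bar>a e j\<bar> \<le> L" "\<bar>\<alpha> e j\<bar> \<le> d e j" "\<bar>\<beta> e j\<bar> \<le> d e j"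
      using bnd e by auto
    have d0: "d e j \<ge> 0" using b(3) by linarith
    have yb: "\<bar>Y e\<bar> \<le> \<bar>Z e (j-1)\<bar>*(1+h*L) + h*d e j"
    proof -
      have "\<bar>Y e\<bar> \<le> \<bar>Z e (j-1) * (1 + h * c e j)\<bar> + \<bar>h * \<alpha> e j\<bar>"
        unfolding Y_def by (rule abs_triangle_ineq)
      also have "\<dots> = \<bar>Z e (j-1)\<bar> * \<bar>1 + h * c e j\<bar> + h * \<bar>\<alpha> e j\<bar>"
        using h by (simp add: abs_mult)
      also have "\<bar>1 + h * c e j\<bar> \<le> 1 + h*L"
      proof -
        have "\<bar>1 + h * c e j\<bar> \<le> 1 + \<bar>h * c e j\<bar>" using abs_triangle_ineq[of 1 "h * c e j"] by simp
        also have "\<bar>h * c e j\<bar> = h * \<bar>c e j\<bar>" using h by (simp add: abs_mult)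
        also have "h * \<bar>c e j\<bar> \<le> h * L" using h b by (intro mult_left_mono) auto
        finally show ?thesis by simp
      qed
      also have "h * \<bar>\<alpha> e j\<bar> \<le> h * d e j" using h b by (intro mult_left_mono) auto
      finally show ?thesis by (simp add: mult_left_mono)
    qed
    have wb: "\<bar>W e\<bar> \<le> sqrt h * (\<bar>Z e (j-1)\<bar>*L + d e j)"
    proof -
      have "\<bar>Z e (j-1) * a e j + \<beta> e j\<bar> \<le> \<bar>Z e (j-1) * a e j\<bar> + \<bar>\<beta> e j\<bar>" by (rule abs_triangle_ineq)
      also have "\<bar>Z e (j-1) * a e j\<bar> = \<bar>Z e (j-1)\<bar> * \<bar>a e j\<bar>" by (simp add: abs_mult)
      also have "\<bar>Z e (j-1)\<bar> * \<bar>a e j\<bar> \<le> \<bar>Z e (j-1)\<bar> * L" using b by (intro mult_left_mono) auto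
      finally have "\<bar>Z e (j-1) * a e j + \<beta> e j\<bar> \<le> \<bar>Z e (j-1)\<bar>*L + d e j" using b by simp
      then show ?thesis unfolding W_def using h by (simp add: abs_mult mult_left_mono)
    qed
    have "(\<bar>Y e + W e\<bar> powr r + \<bar>Y e - W e\<bar> powr r)/2 \<le> exp (K*h) * \<bar>Z e (j-1)\<bar> powr r + K*h * d e j powr r"
    proof -
      have pre: "0 < h \<and> h \<le> T \<and> \<bar>Z e (j-1)\<bar> \<ge> 0 \<and> d e j \<ge> 0 \<and>
        \<bar>Y e\<bar> \<le> \<bar>Z e (j-1)\<bar>*(1+h*L) + h*d e j \<and> \<bar>W e\<bar> \<le> sqrt h * (\<bar>Z e (j-1)\<bar>*L + d e j)"
        using h d0 yb wb by simp
      show ?thesis using PLK[rule_format, OF pre] .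
    qed
    moreover have k1: "\<bar>Z (e(j:=1)) j\<bar> powr r = \<bar>Y e + W e\<bar> powr r" using key[OF e, of 1] by simp
    moreover have k2: "\<bar>Z (e(j:=-1)) j\<bar> powr r = \<bar>Y e - W e\<bar> powr r" using key[OF e, of "-1"] by simp
    ultimately show ?thesis by simp
  qed
  have "Erad n (\<lambda>e. \<bar>Z e j\<bar> powr r) = Erad n (\<lambda>e. (\<bar>Z (e(j:=1)) j\<bar> powr r + \<bar>Z (e(j:=-1)) j\<bar> powr r)/2)"
    using Erad_avg[OF jj, of "\<lambda>e. \<bar>Z e j\<bar> powr r"] .
  also have "\<dots> \<le> Erad n (\<lambda>e. exp (K*h) * \<bar>Z e (j-1)\<bar> powr r + K*h * d e j powr r)"
    by (rule Erad_mono) (rule pt)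
  also have "\<dots> = exp (K*h) * Erad n (\<lambda>e. \<bar>Z e (j-1)\<bar> powr r) + K*h * Erad n (\<lambda>e. d e j powr r)"
    by (rule Erad_lin)
  finally show ?thesis .
qed

lemma iter_bound:
  fixes u :: "nat \<Rightarrow> real" and q B :: real
  assumes q: "q \<ge> 0" and B: "B \<ge> 0" and u0: "u m \<ge> 0"
    and st: "\<And>j. m < j \<Longrightarrow> j \<le> N \<Longrightarrow> u j \<le> exp q * u (j-1) + B"
  shows "m + i \<le> N \<Longrightarrow> u (m+i) \<le> exp (q * i) * (u m + i * B)"
proof (induction i)
  case 0 then show ?case by simp
next
  case (Suc i)
  have IH: "u (m+i) \<le> exp (q * i) * (u m + i * B)" using Suc by simp
  have "u (m + Suc i) \<le> exp q * u (m+i) + B" using st[of "m + Suc i"] Suc.prems by simp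
  also have "\<dots> \<le> exp q * (exp (q * i) * (u m + i * B)) + B"
    using IH by (intro add_right_mono mult_left_mono) auto
  also have "\<dots> = exp (q * Suc i) * (u m + i * B) + B"
    by (simp add: exp_add[symmetric] algebra_simps)
  also have "B \<le> exp (q * Suc i) * B" using q B by (simp add: mult_le_cancel_right1)
  then have "exp (q * Suc i) * (u m + i * B) + B \<le> exp (q * Suc i) * (u m + Suc i * B)"
    by (simp add: algebra_simps)
  finally show ?case .
qed



lemma GL:
  fixes n m l :: nat and r K D T L :: real and Z c a \<alpha> \<beta> d :: "(nat\<Rightarrow>real) \<Rightarrow> nat \<Rightarrow> real"
  assumes T: "T > 0" and n: "n \<ge> 1" and L: "L \<ge> 0" and K: "K \<ge> 0" and D: "D \<ge> 0"
    and PLK: "\<forall>h \<epsilon> d y w. 0 < h \<and> h \<le> T \<and> \<epsilon> \<ge> 0 \<and> d \<ge> 0 \<and>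
      \<bar>y\<bar> \<le> \<epsilon>*(1+h*L) + h*d \<and> \<bar>w\<bar> \<le> sqrt h * (\<epsilon>*L + d) \<longrightarrow>
      (\<bar>y+w\<bar> powr r + \<bar>y-w\<bar> powr r)/2 \<le> exp (K*h) * \<epsilon> powr r + K*h * d powr r"
    and ml: "m \<le> l" "l \<le> n"
    and rec: "\<forall>j. m < j \<and> j \<le> n \<longrightarrow> (\<forall>e\<in>Pn n. Z e j = Z e (j-1) * (1 + (T/real n) * c e j + sqrt (T/real n) * a e j * e j) + (T/real n) * \<alpha> e j + sqrt (T/real n) * \<beta> e j * e j)"
    and inv: "\<forall>j. m < j \<and> j \<le> n \<longrightarrow> (\<forall>e\<in>Pn n. \<forall>s\<in>{-1,1}. Z (e(j:=s)) (j-1) = Z e (j-1) \<and> c (e(j:=s)) j = c e j \<and>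
        a (e(j:=s)) j = a e j \<and> \<alpha> (e(j:=s)) j = \<alpha> e j \<and> \<beta> (e(j:=s)) j = \<beta> e j \<and> d (e(j:=s)) j = d e j)"
    and bnd: "\<forall>j. m < j \<and> j \<le> n \<longrightarrow> (\<forall>e\<in>Pn n. \<bar>c e j\<bar> \<le> L \<and> \<bar>a e j\<bar> \<le> L \<and> \<bar>\<alpha> e j\<bar> \<le> d e j \<and> \<bar>\<beta> e j\<bar> \<le> d e j)"
    and Dbd: "\<forall>j. m < j \<and> j \<le> n \<longrightarrow> Erad n (\<lambda>e. d e j powr r) \<le> D"
  shows "Erad n (\<lambda>e. \<bar>Z e l\<bar> powr r) \<le> exp (K*T) * (Erad n (\<lambda>e. \<bar>Z e m\<bar> powr r) + K*T*D)"
proof -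
  define h where "h = T / real n"
  have h: "0 < h" "h \<le> T" unfolding h_def using T n by (auto simp: field_simps)
  define u where "u = (\<lambda>j. Erad n (\<lambda>e. \<bar>Z e j\<bar> powr r))"
  have u0: "u m \<ge> 0" unfolding u_def by (rule Erad_nonneg) simp
  have st: "u j \<le> exp (K*h) * u (j-1) + K*h*D" if j: "m < j" "j \<le> n" for j
  proof -
    have "u j \<le> exp (K*h) * u (j-1) + K*h * Erad n (\<lambda>e. d e j powr r)"
    proof -
      have j1: "1 \<le> j" using j by simp
      have rj: "\<forall>e\<in>Pn n. Z e j = Z e (j-1) * (1 + (T/real n) * c e j + sqrt (T/real n) * a e j * e j) + (T/real n) * \<alpha> e j + sqrt (T/real n) * \<beta> e j * e j"
        using rec j by blast
      have ij: "\<forall>e\<in>Pn n. \<forall>s\<in>{-1,1}. Z (e(j:=s)) (j-1) = Z e (j-1) \<and> c (e(j:=s)) j = c e j \<and>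
        a (e(j:=s)) j = a e j \<and> \<alpha> (e(j:=s)) j = \<alpha> e j \<and> \<beta> (e(j:=s)) j = \<beta> e j \<and> d (e(j:=s)) j = d e j"
        using inv j by blast
      have bj: "\<forall>e\<in>Pn n. \<bar>c e j\<bar> \<le> L \<and> \<bar>a e j\<bar> \<le> L \<and> \<bar>\<alpha> e j\<bar> \<le> d e j \<and> \<bar>\<beta> e j\<bar> \<le> d e j"
        using bnd j by blast
      show ?thesis unfolding u_def h_def
        by (rule GL_step[where Z=Z and c=c and a=a and \<alpha>=\<alpha> and \<beta>=\<beta> and d=d and j=j and n=n, OF T n L PLK j1 j(2) rj ij bj])
    qed
    also have "K*h * Erad n (\<lambda>e. d e j powr r) \<le> K*h*D"
      using Dbd j K h by (intro mult_left_mono) auto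
    finally show ?thesis by simp
  qed
  have KhD: "K*h*D \<ge> 0" using K h D by simp
  have "u (m + (l-m)) \<le> exp (K*h * real (l-m)) * (u m + real (l-m) * (K*h*D))"
    by (rule iter_bound[of "K*h" "K*h*D" u m n]) (use K h KhD u0 st ml in auto)
  then have a: "u l \<le> exp (K*h * real (l-m)) * (u m + real (l-m) * (K*h*D))" using ml by simp
  have hl: "h * real (l-m) \<le> T"
  proof -
    have "h * real (l-m) \<le> h * real n" using h ml by (intro mult_left_mono) auto
    also have "h * real n = T" unfolding h_def using n by simp
    finally show ?thesis .
  qed
  have "exp (K*h * real (l-m)) \<le> exp (K*T)" using hl K by (simp add: mult.assoc mult_left_mono)
  moreover have "real (l-m) * (K*h*D) \<le> K*T*D"
  proof -
    have "real (l-m) * (K*h*D) = (h * real (l-m)) * (K*D)" by (simp add: algebra_simps)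
    also have "\<dots> \<le> T * (K*D)" using hl K D by (intro mult_right_mono) auto
    finally show ?thesis by (simp add: algebra_simps)
  qed
  ultimately have "exp (K*h * real (l-m)) * (u m + real (l-m) * (K*h*D)) \<le> exp (K*T) * (u m + K*T*D)"
  proof -
    assume e1: "exp (K*h * real (l-m)) \<le> exp (K*T)" and e2: "real (l-m) * (K*h*D) \<le> K*T*D"
    have "u m + real (l-m) * (K*h*D) \<le> u m + K*T*D" using e2 by simp
    moreover have "u m + real (l-m) * (K*h*D) \<ge> 0" using u0 KhD by simp
    ultimately show ?thesis using e1 by (intro mult_mono) auto
  qed
  with a show ?thesis unfolding u_def by simp
qed



definition good :: "real \<Rightarrow> real \<Rightarrow> real \<Rightarrow> (real\<Rightarrow>real\<Rightarrow>real) \<Rightarrow> (real\<Rightarrow>real\<Rightarrow>real) \<Rightarrow> bool" where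
  "good T L \<delta> b \<sigma> \<longleftrightarrow> L \<ge> 0 \<and> \<delta> > 0 \<and> (\<forall>t\<in>{0..T}. \<forall>x u v. \<bar>\<sigma> t x\<bar> \<le> L \<and> \<delta> \<le> \<sigma> t x \<and>
     \<bar>dx b t x\<bar> \<le> L \<and> \<bar>dx \<sigma> t x\<bar> \<le> L \<and> \<bar>b t u - b t v\<bar> \<le> L*\<bar>u - v\<bar> \<and> \<bar>\<sigma> t u - \<sigma> t v\<bar> \<le> L*\<bar>u - v\<bar> \<and>
     \<bar>b t u - b t v - dx b t v * (u - v)\<bar> \<le> L*(u-v)^2 \<and> \<bar>\<sigma> t u - \<sigma> t v - dx \<sigma> t v * (u - v)\<bar> \<le> L*(u-v)^2)"

definition dq :: "(real \<Rightarrow> real) \<Rightarrow> real \<Rightarrow> real \<Rightarrow> real" where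
  "dq f u v = (if u = v then 0 else (f u - f v)/(u - v))"

lemma dq_eq: "f u - f v = dq f u v * (u - v)"
  unfolding dq_def by auto

lemma dq_bnd: assumes "\<bar>f u - f v\<bar> \<le> L*\<bar>u - v\<bar>" "L \<ge> 0" shows "\<bar>dq f u v\<bar> \<le> L"
  using assms unfolding dq_def by (auto simp: abs_divide divide_le_eq)

lemma Xsch_cong:
  "(\<And>i. 1 \<le> i \<Longrightarrow> i \<le> j \<Longrightarrow> e i = e' i) \<Longrightarrow> Xsch T b \<sigma> n k x e j = Xsch T b \<sigma> n k x e' j"
proof (induction j)
  case 0 then show ?case by simp
next
  case (Suc j)
  have "Xsch T b \<sigma> n k x e j = Xsch T b \<sigma> n k x e' j" using Suc by simp
  moreover have "e (Suc j) = e' (Suc j)" using Suc.prems by simp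
  ultimately show ?case by simp
qed

lemma gradX_cong:
  "(\<And>i. 1 \<le> i \<Longrightarrow> i \<le> j \<Longrightarrow> e i = e' i) \<Longrightarrow> gradX T b \<sigma> n k x e j = gradX T b \<sigma> n k x e' j"
proof (induction j)
  case 0 then show ?case by simp
next
  case (Suc j)
  have "gradX T b \<sigma> n k x e j = gradX T b \<sigma> n k x e' j" using Suc by simp
  moreover have "Xsch T b \<sigma> n k x e j = Xsch T b \<sigma> n k x e' j" using Suc.prems by (intro Xsch_cong) simp
  moreover have "e (Suc j) = e' (Suc j)" using Suc.prems by simp
  ultimately show ?case by simp
qed

lemma Xsch_upd_le: "j < i \<Longrightarrow> Xsch T b \<sigma> n k x (e(i:=s)) j = Xsch T b \<sigma> n k x e j"
  by (rule Xsch_cong) auto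

lemma gradX_upd_le: "j < i \<Longrightarrow> gradX T b \<sigma> n k x (e(i:=s)) j = gradX T b \<sigma> n k x e j"
  by (rule gradX_cong) auto

lemma Xsch_init: "j \<le> k \<Longrightarrow> Xsch T b \<sigma> n k x e j = x"
  by (induction j) auto

lemma gradX_init: "j \<le> k \<Longrightarrow> gradX T b \<sigma> n k x e j = 1"
  by (induction j) auto

lemma Xsch_flow: "k \<le> j \<Longrightarrow> Xsch T b \<sigma> n k (Xsch T b \<sigma> n 0 x e k) e j = Xsch T b \<sigma> n 0 x e j"
proof (induction j)
  case 0 then show ?case by simp
next
  case (Suc j)
  show ?case
  proof (cases "Suc j \<le> k")
    case True
    then have "k = Suc j" using Suc.prems by simp
    then show ?thesis using Xsch_init[of "Suc j" k] by simp
  next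
    case False
    then have "k \<le> j" by simp
    then have "Xsch T b \<sigma> n k (Xsch T b \<sigma> n 0 x e k) e j = Xsch T b \<sigma> n 0 x e j" using Suc.IH by simp
    then show ?thesis using False by simp
  qed
qed

lemma Xsch_step: "Xsch T b \<sigma> n 0 x e (Suc j) = Xsch T b \<sigma> n 0 x e j
        + (T / n) * b (real (Suc j) * (T / n)) (Xsch T b \<sigma> n 0 x e j)
        + sqrt (T / n) * \<sigma> (real (Suc j) * (T / n)) (Xsch T b \<sigma> n 0 x e j) * e (Suc j)"
  by simp

lemma tt_range: "j \<le> n \<Longrightarrow> T > 0 \<Longrightarrow> real j * (T / real n) \<in> {0..T}"
proof -
  assume j: "j \<le> n" and T: "T > 0"
  have "real j * (T / real n) \<le> T"
  proof (cases "n = 0")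
    case False
    then have "real j * (T / real n) = T * (real j / real n)" by simp
    also have "\<dots> \<le> T * 1" using j T False by (intro mult_left_mono) (auto simp: field_simps)
    finally show ?thesis by simp
  qed (use T in simp)
  then show ?thesis using T by simp
qed



lemma good_D: "good T L \<delta> b \<sigma> \<Longrightarrow> t \<in> {0..T} \<Longrightarrow> \<bar>\<sigma> t x\<bar> \<le> L \<and> \<delta> \<le> \<sigma> t x \<and>
     \<bar>dx b t x\<bar> \<le> L \<and> \<bar>dx \<sigma> t x\<bar> \<le> L \<and> \<bar>b t u - b t v\<bar> \<le> L*\<bar>u - v\<bar> \<and> \<bar>\<sigma> t u - \<sigma> t v\<bar> \<le> L*\<bar>u - v\<bar> \<and>
     \<bar>b t u - b t v - dx b t v * (u - v)\<bar> \<le> L*(u-v)^2 \<and> \<bar>\<sigma> t u - \<sigma> t v - dx \<sigma> t v * (u - v)\<bar> \<le> L*(u-v)^2"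
  unfolding good_def by blast

lemma good_L: "good T L \<delta> b \<sigma> \<Longrightarrow> L \<ge> 0 \<and> \<delta> > 0" unfolding good_def by blast

lemma Dn_eq: "Dn T n k F e = (F (e(k:=1)) - F (e(k:=-1))) / (2 * sqrt (T / real n))"
  unfolding Dn_def Tshift_def by simp

lemma MD:
  fixes T L \<delta> r K x :: real and n k l :: nat
  assumes T: "T > 0" and gd: "good T L \<delta> b \<sigma>" and n: "n \<ge> 1" and k: "1 \<le> k" "k \<le> n" and l: "l \<le> n"
    and r: "r \<ge> 2" and K: "K \<ge> 0"
    and PLK: "\<forall>h \<epsilon> d y w. 0 < h \<and> h \<le> T \<and> \<epsilon> \<ge> 0 \<and> d \<ge> 0 \<and>
      \<bar>y\<bar> \<le> \<epsilon>*(1+h*L) + h*d \<and> \<bar>w\<bar> \<le> sqrt h * (\<epsilon>*L + d) \<longrightarrow>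
      (\<bar>y+w\<bar> powr r + \<bar>y-w\<bar> powr r)/2 \<le> exp (K*h) * \<epsilon> powr r + K*h * d powr r"
  shows "Erad n (\<lambda>e. \<bar>Dn T n k (\<lambda>e'. Xsch T b \<sigma> n 0 x e' l) e\<bar> powr r) \<le> exp (K*T) * L powr r"
proof (cases "l < k")
  case True
  have "Erad n (\<lambda>e. \<bar>Dn T n k (\<lambda>e'. Xsch T b \<sigma> n 0 x e' l) e\<bar> powr r) = Erad n (\<lambda>e. 0)"
    by (rule Erad_cong) (simp add: Dn_eq Xsch_upd_le[OF True])
  also have "\<dots> \<le> exp (K*T) * L powr r" by (simp add: Erad_const)
  finally show ?thesis .
next
  case False
  then have kl: "k \<le> l" by simp
  have L: "L \<ge> 0" using good_L[OF gd] by simp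
  define h where "h = T / real n"
  have h: "0 < h" "h \<le> T" unfolding h_def using T n by (auto simp: field_simps)
  define X where "X = (\<lambda>e j. Xsch T b \<sigma> n 0 x e j)"
  define tt where "tt = (\<lambda>j::nat. real j * (T / real n))"
  define \<Delta> where "\<Delta> = (\<lambda>e j. X (e(k:=1)) j - X (e(k:=-1)) j)"
  define Z where "Z = (\<lambda>e j. Dn T n k (\<lambda>e'. X e' j) e)"
  have Z\<Delta>: "Z e j = \<Delta> e j / (2 * sqrt h)" for e j
    unfolding Z_def \<Delta>_def h_def by (simp add: Dn_eq)
  define c where "c = (\<lambda>e j. dq (b (tt j)) (X (e(k:=1)) (j-1)) (X (e(k:=-1)) (j-1)))"
  define a where "a = (\<lambda>e j. dq (\<sigma> (tt j)) (X (e(k:=1)) (j-1)) (X (e(k:=-1)) (j-1)))"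
  define z where "z = (\<lambda>(e::nat\<Rightarrow>real) (j::nat). 0::real)"
  have stepX: "X (e(k:=s)) j = X (e(k:=s)) (j-1) + h * b (tt j) (X (e(k:=s)) (j-1))
      + sqrt h * \<sigma> (tt j) (X (e(k:=s)) (j-1)) * e j" if "k < j" for e s j
  proof -
    from that obtain i where i: "j = Suc i" by (cases j) auto
    have "(e(k:=s)) j = e j" using that by simp
    then show ?thesis unfolding X_def i h_def tt_def using Xsch_step[of T b \<sigma> n x "e(k:=s)" i] by simp
  qed
  have rec\<Delta>: "\<Delta> e j = \<Delta> e (j-1) * (1 + h * c e j + sqrt h * a e j * e j)" if "k < j" for e j
  proof -
    define U where "U = X (e(k:=1)) (j-1)"
    define V where "V = X (e(k:=-1)) (j-1)"
    have "\<Delta> e j = (U - V) + h * (b (tt j) U - b (tt j) V) + sqrt h * (\<sigma> (tt j) U - \<sigma> (tt j) V) * e j"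
      unfolding \<Delta>_def stepX[OF that, of e 1] stepX[OF that, of e "-1"] U_def V_def by (simp add: algebra_simps)
    also have "\<dots> = (U - V) * (1 + h * c e j + sqrt h * a e j * e j)"
    proof -
      have cc: "c e j = dq (b (tt j)) U V" "a e j = dq (\<sigma> (tt j)) U V" unfolding c_def a_def U_def V_def by simp_all
      show ?thesis unfolding dq_eq[of "b (tt j)" U V] dq_eq[of "\<sigma> (tt j)" U V] cc
        by (simp add: algebra_simps)
    qed
    finally show ?thesis unfolding \<Delta>_def U_def V_def .
  qed
  have recZ: "\<forall>j. k < j \<and> j \<le> n \<longrightarrow> (\<forall>e\<in>Pn n. Z e j = Z e (j-1) * (1 + (T/real n) * c e j + sqrt (T/real n) * a e j * e j) + (T/real n) * z e j + sqrt (T/real n) * z e j * e j)"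
  proof (intro allI impI ballI)
    fix j e assume j: "k < j \<and> j \<le> n"
    show "Z e j = Z e (j-1) * (1 + (T/real n) * c e j + sqrt (T/real n) * a e j * e j) + (T/real n) * z e j + sqrt (T/real n) * z e j * e j"
    proof -
      have r: "\<Delta> e j = \<Delta> e (j-1) * (1 + h * c e j + sqrt h * a e j * e j)" using rec\<Delta> j by simp
      show ?thesis unfolding Z\<Delta> r z_def h_def[symmetric] by simp
    qed
  qed
  have updk: "(e(j:=s))(k:=t) = (e(k:=t))(j:=s)" if "j \<noteq> k" for e :: "nat \<Rightarrow> real" and j s t
    using that by (rule fun_upd_twist)
  have Xinv: "X ((e(j:=s))(k:=t)) (j-1) = X (e(k:=t)) (j-1)" if "k < j" for e j s t
  proof -
    have "(e(j:=s))(k:=t) = (e(k:=t))(j:=s)" using that by (intro fun_upd_twist) simp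
    then show ?thesis unfolding X_def using that by (simp add: Xsch_upd_le)
  qed
  have invZ: "\<forall>j. k < j \<and> j \<le> n \<longrightarrow> (\<forall>e\<in>Pn n. \<forall>s\<in>{-1,1}. Z (e(j:=s)) (j-1) = Z e (j-1) \<and> c (e(j:=s)) j = c e j \<and>
        a (e(j:=s)) j = a e j \<and> z (e(j:=s)) j = z e j \<and> z (e(j:=s)) j = z e j \<and> z (e(j:=s)) j = z e j)"
  proof (intro allI impI ballI)
    fix j e s assume j: "k < j \<and> j \<le> n" and e: "e \<in> Pn n" and s: "s \<in> {-1, 1::real}"
    have x1: "X ((e(j:=s))(k:=1)) (j-1) = X (e(k:=1)) (j-1)" using Xinv j by blast
    have x2: "X ((e(j:=s))(k:=-1)) (j-1) = X (e(k:=-1)) (j-1)" using Xinv j by blast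
    show "Z (e(j:=s)) (j-1) = Z e (j-1) \<and> c (e(j:=s)) j = c e j \<and>
        a (e(j:=s)) j = a e j \<and> z (e(j:=s)) j = z e j \<and> z (e(j:=s)) j = z e j \<and> z (e(j:=s)) j = z e j"
      unfolding Z\<Delta> \<Delta>_def c_def a_def z_def x1 x2 by simp
  qed
  have bndZ: "\<forall>j. k < j \<and> j \<le> n \<longrightarrow> (\<forall>e\<in>Pn n. \<bar>c e j\<bar> \<le> L \<and> \<bar>a e j\<bar> \<le> L \<and> \<bar>z e j\<bar> \<le> z e j \<and> \<bar>z e j\<bar> \<le> z e j)"
  proof (intro allI impI ballI)
    fix j e assume j: "k < j \<and> j \<le> n"
    have t: "tt j \<in> {0..T}" unfolding tt_def using tt_range j T by auto
    show "\<bar>c e j\<bar> \<le> L \<and> \<bar>a e j\<bar> \<le> L \<and> \<bar>z e j\<bar> \<le> z e j \<and> \<bar>z e j\<bar> \<le> z e j"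
      unfolding c_def a_def z_def using good_D[OF gd t] L by (auto intro!: dq_bnd)
  qed
  have Dbd: "\<forall>j. k < j \<and> j \<le> n \<longrightarrow> Erad n (\<lambda>e. z e j powr r) \<le> 0"
    by (simp add: z_def Erad_const)
  have G: "Erad n (\<lambda>e. \<bar>Z e l\<bar> powr r) \<le> exp (K*T) * (Erad n (\<lambda>e. \<bar>Z e k\<bar> powr r) + K*T*0)"
    by (rule GL[where Z=Z and c=c and a=a and \<alpha>=z and \<beta>=z and d=z, OF T n L K _ PLK kl l recZ invZ bndZ Dbd]) simp
  have Zk: "\<bar>Z e k\<bar> \<le> L" for e
  proof -
    have kk: "k = Suc (k-1)" using k by simp
    have "X (e(k:=s)) k = X e (k-1) + h * b (tt k) (X e (k-1)) + sqrt h * \<sigma> (tt k) (X e (k-1)) * s" for s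
    proof -
      have "X (e(k:=s)) (k-1) = X e (k-1)" unfolding X_def using k by (intro Xsch_upd_le) auto
      moreover have "(e(k:=s)) (Suc (k-1)) = s" using kk by simp
      ultimately show ?thesis unfolding X_def h_def tt_def
        using Xsch_step[of T b \<sigma> n x "e(k:=s)" "k-1"] kk by simp
    qed
    then have "\<Delta> e k = 2 * sqrt h * \<sigma> (tt k) (X e (k-1))" unfolding \<Delta>_def by simp
    then have "Z e k = \<sigma> (tt k) (X e (k-1))" unfolding Z\<Delta> using h by simp
    moreover have "tt k \<in> {0..T}" unfolding tt_def using tt_range k T by auto
    ultimately show ?thesis using good_D[OF gd] by simp
  qed
  have "Erad n (\<lambda>e. \<bar>Z e k\<bar> powr r) \<le> Erad n (\<lambda>e. L powr r)"
    using Zk r by (intro Erad_mono powr_mono2) auto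
  then have "Erad n (\<lambda>e. \<bar>Z e k\<bar> powr r) \<le> L powr r" by (simp add: Erad_const)
  then have "Erad n (\<lambda>e. \<bar>Z e l\<bar> powr r) \<le> exp (K*T) * L powr r"
    using G by (smt (verit) exp_gt_zero mult_left_mono)
  then show ?thesis unfolding Z_def X_def .
qed



lemma sq_powr: "(y^2) powr p = \<bar>y\<bar> powr (2*p)" for y p :: real
proof (cases "y = 0")
  case False
  have eq: "y^2 = \<bar>y\<bar> powr 2" using False by (simp add: powr_numeral)
  show ?thesis unfolding eq by (rule powr_powr)
qed simp

lemma PartII:
  fixes T L \<delta> p K K2 x :: real and n k l :: nat
  assumes T: "T > 0" and gd: "good T L \<delta> b \<sigma>" and n: "n \<ge> 1" and kl: "k < l" "l \<le> n"
    and p: "p \<ge> 2" and K: "K \<ge> 0" and K2: "K2 \<ge> 0"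
    and PLK: "\<forall>h \<epsilon> d y w. 0 < h \<and> h \<le> T \<and> \<epsilon> \<ge> 0 \<and> d \<ge> 0 \<and>
      \<bar>y\<bar> \<le> \<epsilon>*(1+h*L) + h*d \<and> \<bar>w\<bar> \<le> sqrt h * (\<epsilon>*L + d) \<longrightarrow>
      (\<bar>y+w\<bar> powr p + \<bar>y-w\<bar> powr p)/2 \<le> exp (K*h) * \<epsilon> powr p + K*h * d powr p"
    and PLK2: "\<forall>h \<epsilon> d y w. 0 < h \<and> h \<le> T \<and> \<epsilon> \<ge> 0 \<and> d \<ge> 0 \<and>
      \<bar>y\<bar> \<le> \<epsilon>*(1+h*L) + h*d \<and> \<bar>w\<bar> \<le> sqrt h * (\<epsilon>*L + d) \<longrightarrow>
      (\<bar>y+w\<bar> powr (2*p) + \<bar>y-w\<bar> powr (2*p))/2 \<le> exp (K2*h) * \<epsilon> powr (2*p) + K2*h * d powr (2*p)"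
  shows "Erad n (\<lambda>e. \<bar>gradX T b \<sigma> n k (Xsch T b \<sigma> n 0 x e k) e l
           - Dn T n (Suc k) (\<lambda>e'. Xsch T b \<sigma> n 0 x e' l) e
             / \<sigma> (real (Suc k) * (T / n)) (Xsch T b \<sigma> n 0 x e k)\<bar> powr p)
     \<le> (exp (K*T) * ((L * (sqrt T + 1)) powr p + K*T*((2*L/\<delta>) powr p * (exp (K2*T) * L powr (2*p))))) * (T / n) powr (p / 2)"
proof -
  have L: "L \<ge> 0" and \<delta>: "\<delta> > 0" using good_L[OF gd] by auto
  define h where "h = T / real n"
  have h: "0 < h" "h \<le> T" unfolding h_def using T n by (auto simp: field_simps)
  define sh where "sh = sqrt h"
  have sh: "sh > 0" "sh * sh = h" unfolding sh_def using h by auto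
  define X where "X = (\<lambda>e j. Xsch T b \<sigma> n 0 x e j)"
  define tt where "tt = (\<lambda>j::nat. real j * (T / real n))"
  have ttr: "j \<le> n \<Longrightarrow> tt j \<in> {0..T}" for j unfolding tt_def using tt_range T by auto
  define k1 where "k1 = Suc k"
  have k1: "1 \<le> k1" "k1 \<le> n" unfolding k1_def using kl by auto
  define \<sigma>0 where "\<sigma>0 = (\<lambda>e. \<sigma> (tt k1) (X e k))"
  have \<sigma>0: "\<sigma>0 e \<ge> \<delta>" for e unfolding \<sigma>0_def using good_D[OF gd ttr[OF k1(2)]] by simp
  have \<sigma>0p: "\<sigma>0 e > 0" for e using \<sigma>0[of e] \<delta> by simp
  define G where "G = (\<lambda>e j. gradX T b \<sigma> n k (X e k) e j)"
  define \<Delta> where "\<Delta> = (\<lambda>e j. X (e(k1:=1)) j - X (e(k1:=-1)) j)"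
  define Dd where "Dd = (\<lambda>e j. Dn T n k1 (\<lambda>e'. X e' j) e)"
  have Dd\<Delta>: "Dd e j = \<Delta> e j / (2 * sh)" for e j
    unfolding Dd_def \<Delta>_def sh_def h_def by (simp add: Dn_eq)
  define E where "E = (\<lambda>e j. (G e j - Dd e j / \<sigma>0 e) / sh)"
  define c where "c = (\<lambda>e j. dx b (tt j) (X e (j-1)))"
  define a where "a = (\<lambda>e j. dx \<sigma> (tt j) (X e (j-1)))"
  define rb where "rb = (\<lambda>e j. b (tt j) (X (e(k1:=1)) (j-1)) - b (tt j) (X (e(k1:=-1)) (j-1)) - c e j * \<Delta> e (j-1))"
  define rs where "rs = (\<lambda>e j. \<sigma> (tt j) (X (e(k1:=1)) (j-1)) - \<sigma> (tt j) (X (e(k1:=-1)) (j-1)) - a e j * \<Delta> e (j-1))"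
  define \<alpha> where "\<alpha> = (\<lambda>e j. - rb e j / (2 * h * \<sigma>0 e))"
  define \<beta> where "\<beta> = (\<lambda>e j. - rs e j / (2 * h * \<sigma>0 e))"
  define d where "d = (\<lambda>e j. 2 * L / \<delta> * (Dd e (j-1))^2)"
  have stepX: "X (e(k1:=s)) j = X (e(k1:=s)) (j-1) + h * b (tt j) (X (e(k1:=s)) (j-1))
      + sh * \<sigma> (tt j) (X (e(k1:=s)) (j-1)) * e j" if "k1 < j" for e s j
  proof -
    from that obtain i where i: "j = Suc i" by (cases j) auto
    have "(e(k1:=s)) j = e j" using that by simp
    then show ?thesis unfolding X_def i h_def sh_def tt_def using Xsch_step[of T b \<sigma> n x "e(k1:=s)" i] by simp
  qed
  have stepX0: "X e j = X e (j-1) + h * b (tt j) (X e (j-1)) + sh * \<sigma> (tt j) (X e (j-1)) * e j" if "0 < j" for e j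
  proof -
    from that obtain i where i: "j = Suc i" by (cases j) auto
    show ?thesis unfolding X_def i h_def sh_def tt_def using Xsch_step[of T b \<sigma> n x e i] by simp
  qed
  have rec\<Delta>: "\<Delta> e j = \<Delta> e (j-1) * (1 + h * c e j + sh * a e j * e j) + h * rb e j + sh * rs e j * e j"
    if "k1 < j" for e j
    unfolding \<Delta>_def stepX[OF that, of e 1] stepX[OF that, of e "-1"] rb_def rs_def
    by (simp add: algebra_simps)
  have recG: "G e j = G e (j-1) * (1 + h * c e j + sh * a e j * e j)" if "k < j" for e j
  proof -
    from that obtain i where i: "j = Suc i" and ki: "k \<le> i" by (cases j) auto
    have fl: "Xsch T b \<sigma> n k (X e k) e i = X e i" unfolding X_def using ki by (rule Xsch_flow)
    show ?thesis unfolding G_def i c_def a_def using ki fl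
      by (simp add: h_def sh_def tt_def algebra_simps)
  qed
  have recE: "E e j = E e (j-1) * (1 + h * c e j + sh * a e j * e j) + h * \<alpha> e j + sh * \<beta> e j * e j"
    if "k1 < j" for e j
  proof -
    have kj: "k < j" using that unfolding k1_def by simp
    define F where "F = 1 + h * c e j + sh * a e j * e j"
    have g: "G e j = G e (j-1) * F" unfolding F_def by (rule recG[OF kj])
    have dd: "Dd e j = Dd e (j-1) * F + (h * rb e j + sh * rs e j * e j) / (2* sh)"
      unfolding Dd\<Delta> rec\<Delta>[OF that] F_def using sh by (simp add: field_simps)
    have s0: "\<sigma>0 e \<noteq> 0" using \<sigma>0p[of e] by simp
    show ?thesis unfolding E_def g dd \<alpha>_def \<beta>_def F_def[symmetric] using sh s0
      by (simp add: field_simps) (simp add: sh(2)[symmetric] algebra_simps)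
  qed
  have recE': "\<forall>j. k1 < j \<and> j \<le> n \<longrightarrow> (\<forall>e\<in>Pn n. E e j = E e (j-1) * (1 + (T/real n) * c e j + sqrt (T/real n) * a e j * e j) + (T/real n) * \<alpha> e j + sqrt (T/real n) * \<beta> e j * e j)"
    using recE unfolding h_def sh_def by blast
  have Xupd: "X (e(j:=s)) i = X e i" if "i < j" for e j s i
    unfolding X_def using that by (rule Xsch_upd_le)
  have Xinv: "X ((e(j:=s))(k1:=t)) (j-1) = X (e(k1:=t)) (j-1)" if "k1 < j" for e j s t
  proof -
    have "(e(j:=s))(k1:=t) = (e(k1:=t))(j:=s)" using that by (intro fun_upd_twist) simp
    then show ?thesis unfolding X_def using that by (simp add: Xsch_upd_le)
  qed
  have invE: "\<forall>j. k1 < j \<and> j \<le> n \<longrightarrow> (\<forall>e\<in>Pn n. \<forall>s\<in>{-1,1}. E (e(j:=s)) (j-1) = E e (j-1) \<and> c (e(j:=s)) j = c e j \<and>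
        a (e(j:=s)) j = a e j \<and> \<alpha> (e(j:=s)) j = \<alpha> e j \<and> \<beta> (e(j:=s)) j = \<beta> e j \<and> d (e(j:=s)) j = d e j)"
  proof (intro allI impI ballI)
    fix j e s assume j: "k1 < j \<and> j \<le> n" and e: "e \<in> Pn n" and s: "s \<in> {-1, 1::real}"
    have kj: "k < j" using j unfolding k1_def by simp
    have x1: "X ((e(j:=s))(k1:=1)) (j-1) = X (e(k1:=1)) (j-1)" using Xinv j by blast
    have x2: "X ((e(j:=s))(k1:=-1)) (j-1) = X (e(k1:=-1)) (j-1)" using Xinv j by blast
    have x0: "X (e(j:=s)) (j-1) = X e (j-1)" using Xupd j by simp
    have xk: "X (e(j:=s)) k = X e k" using Xupd kj by simp
    have gg: "gradX T b \<sigma> n k (X e k) (e(j:=s)) (j-1) = gradX T b \<sigma> n k (X e k) e (j-1)"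
      using j by (intro gradX_upd_le) simp
    have s0: "\<sigma>0 (e(j:=s)) = \<sigma>0 e" unfolding \<sigma>0_def xk ..
    have D0: "\<Delta> (e(j:=s)) (j-1) = \<Delta> e (j-1)" unfolding \<Delta>_def x1 x2 ..
    have cc: "c (e(j:=s)) j = c e j" "a (e(j:=s)) j = a e j" unfolding c_def a_def x0 by simp_all
    have rr: "rb (e(j:=s)) j = rb e j" "rs (e(j:=s)) j = rs e j"
      unfolding rb_def rs_def x1 x2 cc D0 by simp_all
    have GG: "G (e(j:=s)) (j-1) = G e (j-1)" unfolding G_def xk gg ..
    show "E (e(j:=s)) (j-1) = E e (j-1) \<and> c (e(j:=s)) j = c e j \<and>
        a (e(j:=s)) j = a e j \<and> \<alpha> (e(j:=s)) j = \<alpha> e j \<and> \<beta> (e(j:=s)) j = \<beta> e j \<and> d (e(j:=s)) j = d e j"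
      unfolding E_def d_def \<alpha>_def \<beta>_def Dd\<Delta> GG D0 s0 cc rr by simp
  qed
  have bndE: "\<forall>j. k1 < j \<and> j \<le> n \<longrightarrow> (\<forall>e\<in>Pn n. \<bar>c e j\<bar> \<le> L \<and> \<bar>a e j\<bar> \<le> L \<and> \<bar>\<alpha> e j\<bar> \<le> d e j \<and> \<bar>\<beta> e j\<bar> \<le> d e j)"
  proof (intro allI impI ballI)
    fix j e assume j: "k1 < j \<and> j \<le> n" and e: "e \<in> Pn n"
    have t: "tt j \<in> {0..T}" using ttr j by simp
    note gdj = good_D[OF gd t]
    define U where "U = X (e(k1:=1)) (j-1)"
    define V where "V = X (e(k1:=-1)) (j-1)"
    have \<Delta>UV: "\<Delta> e (j-1) = U - V" unfolding \<Delta>_def U_def V_def ..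
    have ek: "e k1 = 1 \<or> e k1 = -1" using Pn_val[OF e] k1 by auto
    have XUV: "X e (j-1) = U \<or> X e (j-1) = V"
    proof -
      have "e = e(k1 := e k1)" by simp
      then show ?thesis unfolding U_def V_def using ek by (metis)
    qed
    have rem: "\<bar>f U - f V - f' (X e (j-1)) * (U - V)\<bar> \<le> L * (U - V)^2"
      if hf: "\<forall>u v. \<bar>f u - f v - f' v * (u - v)\<bar> \<le> L*(u-v)^2" for f f' :: "real \<Rightarrow> real"
      using XUV
    proof
      assume "X e (j-1) = U"
      moreover have "\<bar>f V - f U - f' U * (V - U)\<bar> \<le> L*(V-U)^2" using hf by blast
      ultimately show ?thesis by (simp add: abs_minus_commute power2_commute algebra_simps)
    next
      assume "X e (j-1) = V"
      then show ?thesis using hf by simp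
    qed
    have rbb: "\<bar>rb e j\<bar> \<le> L * (\<Delta> e (j-1))^2"
      unfolding rb_def \<Delta>UV c_def U_def[symmetric] V_def[symmetric]
      by (rule rem[of "b (tt j)" "dx b (tt j)"]) (use gdj in blast)
    have rsb: "\<bar>rs e j\<bar> \<le> L * (\<Delta> e (j-1))^2"
      unfolding rs_def \<Delta>UV a_def U_def[symmetric] V_def[symmetric]
      by (rule rem[of "\<sigma> (tt j)" "dx \<sigma> (tt j)"]) (use gdj in blast)
    have conv: "L * (\<Delta> e (j-1))^2 / (2 * h * \<delta>) = d e j"
      unfolding d_def Dd\<Delta> using sh \<delta> by (simp add: field_simps power2_eq_square)
    have fr: "\<bar>r0\<bar> / (2 * h * \<sigma>0 e) \<le> L * (\<Delta> e (j-1))^2 / (2 * h * \<delta>)" if "\<bar>r0\<bar> \<le> L * (\<Delta> e (j-1))^2" for r0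
      using that \<sigma>0[of e] \<delta> h L by (intro frac_le) auto
    have "\<bar>\<alpha> e j\<bar> = \<bar>rb e j\<bar> / (2 * h * \<sigma>0 e)" unfolding \<alpha>_def using h \<sigma>0p[of e] by (simp add: abs_divide)
    moreover have "\<bar>\<beta> e j\<bar> = \<bar>rs e j\<bar> / (2 * h * \<sigma>0 e)" unfolding \<beta>_def using h \<sigma>0p[of e] by (simp add: abs_divide)
    ultimately show "\<bar>c e j\<bar> \<le> L \<and> \<bar>a e j\<bar> \<le> L \<and> \<bar>\<alpha> e j\<bar> \<le> d e j \<and> \<bar>\<beta> e j\<bar> \<le> d e j"
      unfolding c_def a_def using gdj fr[OF rbb] fr[OF rsb] conv by simp
  qed
  define D2 where "D2 = (2*L/\<delta>) powr p * (exp (K2*T) * L powr (2*p))"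
  have D2: "D2 \<ge> 0" unfolding D2_def by simp
  have DbdE: "\<forall>j. k1 < j \<and> j \<le> n \<longrightarrow> Erad n (\<lambda>e. d e j powr p) \<le> D2"
  proof (intro allI impI)
    fix j assume j: "k1 < j \<and> j \<le> n"
    have "Erad n (\<lambda>e. d e j powr p) = Erad n (\<lambda>e. (2*L/\<delta>) powr p * \<bar>Dd e (j-1)\<bar> powr (2*p))"
    proof (rule Erad_cong)
      fix e :: "nat \<Rightarrow> real"
      have "d e j powr p = (2*L/\<delta>) powr p * ((Dd e (j-1))^2) powr p"
        unfolding d_def using L \<delta> by (intro powr_mult)
      then show "d e j powr p = (2*L/\<delta>) powr p * \<bar>Dd e (j-1)\<bar> powr (2*p)" by (simp add: sq_powr)
    qed
    also have "\<dots> = (2*L/\<delta>) powr p * Erad n (\<lambda>e. \<bar>Dd e (j-1)\<bar> powr (2*p))" by (rule Erad_scale)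
    also have "Erad n (\<lambda>e. \<bar>Dd e (j-1)\<bar> powr (2*p)) \<le> exp (K2*T) * L powr (2*p)"
      unfolding Dd_def X_def
      by (rule MD[OF T gd n k1 _ _ K2 PLK2]) (use j p in auto)
    then have "(2*L/\<delta>) powr p * Erad n (\<lambda>e. \<bar>Dd e (j-1)\<bar> powr (2*p)) \<le> D2"
      unfolding D2_def by (intro mult_left_mono) auto
    finally show "Erad n (\<lambda>e. d e j powr p) \<le> D2" .
  qed
  have Ek1: "\<bar>E e k1\<bar> \<le> L * (sqrt T + 1)" if e: "e \<in> Pn n" for e
  proof -
    have gk: "G e k1 = 1 + h * dx b (tt k1) (X e k) + sh * dx \<sigma> (tt k1) (X e k) * e k1"
      unfolding G_def k1_def using gradX_init[of k k T b \<sigma> n "X e k" e] Xsch_init[of k k T b \<sigma> n "X e k" e]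
      by (simp add: h_def sh_def tt_def)
    have xs: "X (e(k1:=s)) k1 = X e k + h * b (tt k1) (X e k) + sh * \<sigma> (tt k1) (X e k) * s" for s
    proof -
      have "X (e(k1:=s)) k = X e k" using Xupd[of k k1] unfolding k1_def by simp
      then show ?thesis unfolding X_def k1_def h_def sh_def tt_def
        using Xsch_step[of T b \<sigma> n x "e(Suc k:=s)" k] unfolding X_def by simp
    qed
    have "\<Delta> e k1 = 2 * sh * \<sigma>0 e" unfolding \<Delta>_def xs \<sigma>0_def by simp
    then have "Dd e k1 / \<sigma>0 e = 1" unfolding Dd\<Delta> using sh \<sigma>0p[of e] by simp
    then have "E e k1 = sh * dx b (tt k1) (X e k) + dx \<sigma> (tt k1) (X e k) * e k1"
      unfolding E_def gk using sh by (simp add: field_simps)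
    also have "\<bar>\<dots>\<bar> \<le> sh * L + L * 1"
    proof -
      have t: "tt k1 \<in> {0..T}" using ttr k1 by simp
      have ek: "\<bar>e k1\<bar> = 1" using Pn_val[OF e, of k1] k1 by (auto simp del: One_nat_def)
      have "\<bar>sh * dx b (tt k1) (X e k)\<bar> \<le> sh * L" using good_D[OF gd t] sh by (simp add: abs_mult)
      moreover have "\<bar>dx \<sigma> (tt k1) (X e k) * e k1\<bar> \<le> L * 1" using good_D[OF gd t] ek by (simp add: abs_mult)
      ultimately show ?thesis by (smt (verit))
    qed
    also have "sh * L + L * 1 \<le> L * (sqrt T + 1)"
    proof -
      have "sh \<le> sqrt T" unfolding sh_def using h by simp
      then have "sh * L \<le> sqrt T * L" using L by (intro mult_right_mono) auto
      then show ?thesis by (simp add: algebra_simps)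
    qed
    finally show ?thesis .
  qed
  have E0: "Erad n (\<lambda>e. \<bar>E e k1\<bar> powr p) \<le> (L * (sqrt T + 1)) powr p"
  proof -
    have "Erad n (\<lambda>e. \<bar>E e k1\<bar> powr p) \<le> Erad n (\<lambda>e. (L * (sqrt T + 1)) powr p)"
      using Ek1 p by (intro Erad_mono powr_mono2) auto
    then show ?thesis by (simp add: Erad_const)
  qed
  have GLr: "Erad n (\<lambda>e. \<bar>E e l\<bar> powr p) \<le> exp (K*T) * (Erad n (\<lambda>e. \<bar>E e k1\<bar> powr p) + K*T*D2)"
    by (rule GL[where Z=E and c=c and a=a and \<alpha>=\<alpha> and \<beta>=\<beta> and d=d, OF T n L K D2 PLK _ kl(2) recE' invE bndE DbdE])
       (simp add: k1_def kl(1) Suc_leI)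
  have fin: "Erad n (\<lambda>e. \<bar>E e l\<bar> powr p) \<le> exp (K*T) * ((L * (sqrt T + 1)) powr p + K*T*D2)"
    using GLr E0 by (smt (verit) exp_gt_zero mult_left_mono)
  have pt: "\<bar>G e l - Dd e l / \<sigma>0 e\<bar> powr p = h powr (p/2) * \<bar>E e l\<bar> powr p" for e
  proof -
    have "G e l - Dd e l / \<sigma>0 e = sh * E e l" unfolding E_def using sh by simp
    then have "\<bar>G e l - Dd e l / \<sigma>0 e\<bar> powr p = sh powr p * \<bar>E e l\<bar> powr p"
      using sh by (simp add: abs_mult powr_mult)
    also have "sh powr p = h powr (p/2)" unfolding sh_def using h
      by (simp add: powr_half_sqrt[symmetric] powr_powr)
    finally show ?thesis .
  qed
  have "Erad n (\<lambda>e. \<bar>G e l - Dd e l / \<sigma>0 e\<bar> powr p) = h powr (p/2) * Erad n (\<lambda>e. \<bar>E e l\<bar> powr p)"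
    unfolding pt by (rule Erad_scale)
  also have "\<dots> \<le> h powr (p/2) * (exp (K*T) * ((L * (sqrt T + 1)) powr p + K*T*D2))"
    using fin by (intro mult_left_mono) auto
  finally show ?thesis unfolding G_def Dd_def \<sigma>0_def X_def tt_def k1_def D2_def h_def by (simp add: mult.commute)
qed



lemma lip_from_deriv:
  fixes f f' :: "real \<Rightarrow> real"
  assumes d: "\<And>y. (f has_real_derivative f' y) (at y)" and b: "\<And>y. \<bar>f' y\<bar> \<le> M"
  shows "\<bar>f u - f v\<bar> \<le> M * \<bar>u - v\<bar>"
proof -
  have *: "\<bar>f q - f p\<bar> \<le> M * \<bar>q - p\<bar>" if pq: "p < q" for p q
  proof -
    obtain z where "f q - f p = (q - p) * f' z" using MVT2[OF pq, of f f'] d by blast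
    then have "\<bar>f q - f p\<bar> = \<bar>q - p\<bar> * \<bar>f' z\<bar>" by (simp add: abs_mult)
    also have "\<dots> \<le> \<bar>q - p\<bar> * M" using b by (intro mult_left_mono) auto
    finally show ?thesis by (simp add: mult.commute)
  qed
  show ?thesis
  proof (cases u v rule: linorder_cases)
    case less then show ?thesis using *[OF less] by (simp add: abs_minus_commute)
  next
    case equal then show ?thesis by simp
  next
    case greater then show ?thesis using *[OF greater] by simp
  qed
qed

lemma rem_from_deriv:
  fixes f f' :: "real \<Rightarrow> real"
  assumes d: "\<And>y. (f has_real_derivative f' y) (at y)" and b: "\<And>u v. \<bar>f' u - f' v\<bar> \<le> M * \<bar>u - v\<bar>"
  shows "\<bar>f u - f v - f' v * (u - v)\<bar> \<le> M * (u - v)^2"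
proof -
  define g where "g = (\<lambda>y. f y - f' v * y)"
  have dg: "(g has_real_derivative (f' y - f' v)) (at y)" for y
    unfolding g_def by (auto intro!: derivative_eq_intros d)
  have eq: "f u - f v - f' v * (u - v) = g u - g v" unfolding g_def by (simp add: algebra_simps)
  have *: "\<bar>g q - g p\<bar> \<le> M * (u - v)^2" if pq0: "p < q" and pq: "{p, q} = {u, v}" for p q
  proof -
    obtain z where z: "p < z" "z < q" "g q - g p = (q - p) * (f' z - f' v)"
      using MVT2[OF pq0, of g "\<lambda>y. f' y - f' v"] dg by blast
    have "\<bar>z - v\<bar> \<le> \<bar>u - v\<bar>" using z pq by (auto simp: doubleton_eq_iff)
    have qp: "\<bar>q - p\<bar> = \<bar>u - v\<bar>" using pq by (auto simp: doubleton_eq_iff abs_minus_commute)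
    have "\<bar>g q - g p\<bar> = \<bar>q - p\<bar> * \<bar>f' z - f' v\<bar>" using z by (simp add: abs_mult)
    also have "\<dots> \<le> \<bar>u - v\<bar> * (M * \<bar>z - v\<bar>)" unfolding qp using b by (intro mult_left_mono) auto
    also have "\<dots> \<le> \<bar>u - v\<bar> * (M * \<bar>u - v\<bar>)"
    proof -
      have "M \<ge> 0" using b[of 1 0] by simp
      then show ?thesis using \<open>\<bar>z - v\<bar> \<le> \<bar>u - v\<bar>\<close> by (intro mult_left_mono) auto
    qed
    also have "\<dots> = M * (u - v)^2" by (simp add: power2_eq_square)
    finally show ?thesis .
  qed
  show ?thesis unfolding eq
  proof (cases u v rule: linorder_cases)
    case less then show "\<bar>g u - g v\<bar> \<le> M * (u - v)^2" using *[OF less] by (simp add: abs_minus_commute insert_commute)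
  next
    case equal then show "\<bar>g u - g v\<bar> \<le> M * (u - v)^2" by simp
  next
    case greater then show "\<bar>g u - g v\<bar> \<le> M * (u - v)^2" using *[OF greater] by (simp add: insert_commute)
  qed
qed

lemma good_from_A:
  assumes T: "T > 0" and A: "assumption_A T b \<sigma>"
  shows "\<exists>L \<delta>. good T L \<delta> b \<sigma>"
proof -
  from A have tb: "twice_space_diff T b" and ts: "twice_space_diff T \<sigma>"
    and cs: "cont_bdd T \<sigma>" and cbx: "cont_bdd T (dx b)" and cbxx: "cont_bdd T (dxx b)"
    and csx: "cont_bdd T (dx \<sigma>)" and csxx: "cont_bdd T (dxx \<sigma>)"
    and dl: "\<exists>\<delta>>0. \<forall>t\<in>{0..T}. \<forall>x. \<sigma> t x \<ge> \<delta>"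
    unfolding assumption_A_def by auto
  obtain M1 where M1: "\<forall>t\<in>{0..T}. \<forall>x. \<bar>\<sigma> t x\<bar> \<le> M1" using cs unfolding cont_bdd_def by auto
  obtain M2 where M2: "\<forall>t\<in>{0..T}. \<forall>x. \<bar>dx b t x\<bar> \<le> M2" using cbx unfolding cont_bdd_def by auto
  obtain M3 where M3: "\<forall>t\<in>{0..T}. \<forall>x. \<bar>dxx b t x\<bar> \<le> M3" using cbxx unfolding cont_bdd_def by auto
  obtain M4 where M4: "\<forall>t\<in>{0..T}. \<forall>x. \<bar>dx \<sigma> t x\<bar> \<le> M4" using csx unfolding cont_bdd_def by auto
  obtain M5 where M5: "\<forall>t\<in>{0..T}. \<forall>x. \<bar>dxx \<sigma> t x\<bar> \<le> M5" using csxx unfolding cont_bdd_def by auto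
  obtain \<delta> where \<delta>: "\<delta> > 0" "\<forall>t\<in>{0..T}. \<forall>x. \<sigma> t x \<ge> \<delta>" using dl by auto
  define L where "L = \<bar>M1\<bar> + \<bar>M2\<bar> + \<bar>M3\<bar> + \<bar>M4\<bar> + \<bar>M5\<bar>"
  have L: "L \<ge> 0" unfolding L_def by simp
  have "\<bar>\<sigma> t x\<bar> \<le> L \<and> \<delta> \<le> \<sigma> t x \<and>
     \<bar>dx b t x\<bar> \<le> L \<and> \<bar>dx \<sigma> t x\<bar> \<le> L \<and> \<bar>b t u - b t v\<bar> \<le> L*\<bar>u - v\<bar> \<and> \<bar>\<sigma> t u - \<sigma> t v\<bar> \<le> L*\<bar>u - v\<bar> \<and>
     \<bar>b t u - b t v - dx b t v * (u - v)\<bar> \<le> L*(u-v)^2 \<and> \<bar>\<sigma> t u - \<sigma> t v - dx \<sigma> t v * (u - v)\<bar> \<le> L*(u-v)^2"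
    if t: "t \<in> {0..T}" for t x u v
  proof -
    have b1: "\<bar>\<sigma> t y\<bar> \<le> L" "\<bar>dx b t y\<bar> \<le> L" "\<bar>dxx b t y\<bar> \<le> L" "\<bar>dx \<sigma> t y\<bar> \<le> L" "\<bar>dxx \<sigma> t y\<bar> \<le> L" for y
    proof -
      have MLb: "M1 \<le> L" "M2 \<le> L" "M3 \<le> L" "M4 \<le> L" "M5 \<le> L"
        unfolding L_def using abs_ge_self[of M1] abs_ge_self[of M2] abs_ge_self[of M3] abs_ge_self[of M4] abs_ge_self[of M5]
          abs_ge_zero[of M1] abs_ge_zero[of M2] abs_ge_zero[of M3] abs_ge_zero[of M4] abs_ge_zero[of M5]
        by (linarith, linarith, linarith, linarith, linarith)
      show "\<bar>\<sigma> t y\<bar> \<le> L" using M1 t MLb(1) by (meson order_trans)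
      show "\<bar>dx b t y\<bar> \<le> L" using M2 t MLb(2) by (meson order_trans)
      show "\<bar>dxx b t y\<bar> \<le> L" using M3 t MLb(3) by (meson order_trans)
      show "\<bar>dx \<sigma> t y\<bar> \<le> L" using M4 t MLb(4) by (meson order_trans)
      show "\<bar>dxx \<sigma> t y\<bar> \<le> L" using M5 t MLb(5) by (meson order_trans)
    qed
    have db: "(b t has_real_derivative dx b t y) (at y)" "(dx b t has_real_derivative dxx b t y) (at y)" for y
      using tb t unfolding twice_space_diff_def by auto
    have ds: "(\<sigma> t has_real_derivative dx \<sigma> t y) (at y)" "(dx \<sigma> t has_real_derivative dxx \<sigma> t y) (at y)" for y
      using ts t unfolding twice_space_diff_def by auto
    have lb: "\<bar>b t u' - b t v'\<bar> \<le> L * \<bar>u' - v'\<bar>" for u' v'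
      by (rule lip_from_deriv[OF db(1) b1(2)])
    have ls: "\<bar>\<sigma> t u' - \<sigma> t v'\<bar> \<le> L * \<bar>u' - v'\<bar>" for u' v'
      by (rule lip_from_deriv[OF ds(1) b1(4)])
    have lbx: "\<bar>dx b t u' - dx b t v'\<bar> \<le> L * \<bar>u' - v'\<bar>" for u' v'
      by (rule lip_from_deriv[OF db(2) b1(3)])
    have lsx: "\<bar>dx \<sigma> t u' - dx \<sigma> t v'\<bar> \<le> L * \<bar>u' - v'\<bar>" for u' v'
      by (rule lip_from_deriv[OF ds(2) b1(5)])
    have rb: "\<bar>b t u - b t v - dx b t v * (u - v)\<bar> \<le> L*(u-v)^2"
      by (rule rem_from_deriv[OF db(1) lbx])
    have rs: "\<bar>\<sigma> t u - \<sigma> t v - dx \<sigma> t v * (u - v)\<bar> \<le> L*(u-v)^2"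
      by (rule rem_from_deriv[OF ds(1) lsx])
    have "\<delta> \<le> \<sigma> t x" using \<delta>(2) t by blast
    then show ?thesis using b1(1)[of x] b1(2)[of x] b1(4)[of x] lb[of u v] ls[of u v] rb rs by blast
  qed
  then have "good T L \<delta> b \<sigma>" unfolding good_def using L \<delta> by blast
  then show ?thesis by blast
qed



lemma PartI_pt:
  fixes T :: real and n m l :: nat and s :: real
  assumes T: "T > 0" and n: "n \<ge> 1" and m: "1 \<le> m" "m \<le> n" and s: "s \<in> {1, -1}" and e: "e \<in> Pn n" and p: "p \<ge> 0"
  shows "\<bar>Xsch T b \<sigma> n 0 x e l - Tshift m s (\<lambda>e'. Xsch T b \<sigma> n 0 x e' l) e\<bar> powr p
     \<le> (T / n) powr (p/2) * (2 powr p * \<bar>Dn T n m (\<lambda>e'. Xsch T b \<sigma> n 0 x e' l) e\<bar> powr p)"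
proof -
  define F where "F = (\<lambda>e'. Xsch T b \<sigma> n 0 x e' l)"
  define h where "h = T / real n"
  have h: "h > 0" unfolding h_def using T n by simp
  have em: "e m = 1 \<or> e m = -1" using Pn_val[OF e] m by auto
  have ee: "e = e(m := e m)" by simp
  have s': "s = 1 \<or> s = -1" using s by auto
  have le: "\<bar>F e - F (e(m:=s))\<bar> \<le> \<bar>F (e(m:=1)) - F (e(m:=-1))\<bar>"
    using em s' 
  proof (elim disjE)
    assume a: "e m = 1" "s = 1"
    have "F e = F (e(m:=1))" using a ee by metis
    then show ?thesis using a by simp
  next
    assume a: "e m = 1" "s = -1"
    have "F e = F (e(m:=1))" using a ee by metis
    then show ?thesis using a by simp
  next
    assume a: "e m = -1" "s = 1"
    have "F e = F (e(m:=-1))" using a ee by metis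
    then show ?thesis using a by (simp add: abs_minus_commute)
  next
    assume a: "e m = -1" "s = -1"
    have "F e = F (e(m:=-1))" using a ee by metis
    then show ?thesis using a by simp
  qed
  have dn: "\<bar>F (e(m:=1)) - F (e(m:=-1))\<bar> = 2 * sqrt h * \<bar>Dn T n m F e\<bar>"
    unfolding Dn_eq h_def using T n by (simp add: abs_divide abs_mult)
  have "\<bar>F e - Tshift m s F e\<bar> powr p \<le> (2 * sqrt h * \<bar>Dn T n m F e\<bar>) powr p"
    unfolding Tshift_def using le dn p by (intro powr_mono2) auto
  also have "\<dots> = 2 powr p * sqrt h powr p * \<bar>Dn T n m F e\<bar> powr p"
    using h by (simp add: powr_mult)
  also have "sqrt h powr p = h powr (p/2)" using h by (simp add: powr_half_sqrt[symmetric] powr_powr)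
  finally show ?thesis unfolding F_def h_def by (simp add: algebra_simps)
qed

theorem mainTheorem11:
  fixes T p :: real and b \<sigma> :: "real \<Rightarrow> real \<Rightarrow> real"
  assumes "T > 0" and "assumption_A T b \<sigma>" and "p \<ge> 2"
  shows "\<exists>C. \<forall>n::nat. \<forall>x::real. n \<ge> 1 \<longrightarrow>
    (\<forall>l m s. 1 \<le> l \<and> l \<le> n \<and> 1 \<le> m \<and> m \<le> n \<and> s \<in> {1, -1} \<longrightarrow>
       Erad n (\<lambda>e. \<bar>Xsch T b \<sigma> n 0 x e l - Tshift m s (\<lambda>e'. Xsch T b \<sigma> n 0 x e' l) e\<bar> powr p)
         \<le> C * (T / n) powr (p / 2)) \<and>
    (\<forall>k m. k < m \<and> m \<le> n \<longrightarrow>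
       Erad n (\<lambda>e. \<bar>gradX T b \<sigma> n k (Xsch T b \<sigma> n 0 x e k) e m
           - Dn T n (Suc k) (\<lambda>e'. Xsch T b \<sigma> n 0 x e' m) e
             / \<sigma> (real (Suc k) * (T / n)) (Xsch T b \<sigma> n 0 x e k)\<bar> powr p)
         \<le> C * (T / n) powr (p / 2)) \<and>
    (\<forall>k m. 1 \<le> k \<and> k \<le> m \<and> m \<le> n \<longrightarrow>
       Erad n (\<lambda>e. \<bar>Dn T n k (\<lambda>e'. Xsch T b \<sigma> n 0 x e' m) e\<bar> powr p) \<le> C)"
proof -
  note T = assms(1) and p = assms(3)
  obtain L \<delta> where gd: "good T L \<delta> b \<sigma>" using good_from_A[OF assms(1,2)] by blast
  have L: "L \<ge> 0" and \<delta>: "\<delta> > 0" using good_L[OF gd] by auto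
  obtain K where K: "K > 0" and PLK: "\<forall>h \<epsilon> d y w. 0 < h \<and> h \<le> T \<and> \<epsilon> \<ge> 0 \<and> d \<ge> 0 \<and>
      \<bar>y\<bar> \<le> \<epsilon>*(1+h*L) + h*d \<and> \<bar>w\<bar> \<le> sqrt h * (\<epsilon>*L + d) \<longrightarrow>
      (\<bar>y+w\<bar> powr p + \<bar>y-w\<bar> powr p)/2 \<le> exp (K*h) * \<epsilon> powr p + K*h * d powr p"
    using PL[OF p T L] by blast
  have p2: "2*p \<ge> 2" using p by simp
  obtain K2 where K2: "K2 > 0" and PLK2: "\<forall>h \<epsilon> d y w. 0 < h \<and> h \<le> T \<and> \<epsilon> \<ge> 0 \<and> d \<ge> 0 \<and>
      \<bar>y\<bar> \<le> \<epsilon>*(1+h*L) + h*d \<and> \<bar>w\<bar> \<le> sqrt h * (\<epsilon>*L + d) \<longrightarrow>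
      (\<bar>y+w\<bar> powr (2*p) + \<bar>y-w\<bar> powr (2*p))/2 \<le> exp (K2*h) * \<epsilon> powr (2*p) + K2*h * d powr (2*p)"
    using PL[OF p2 T L] by blast
  define C3 where "C3 = exp (K*T) * L powr p"
  define C1 where "C1 = 2 powr p * C3"
  define C2 where "C2 = exp (K*T) * ((L * (sqrt T + 1)) powr p + K*T*((2*L/\<delta>) powr p * (exp (K2*T) * L powr (2*p))))"
  have C3: "C3 \<ge> 0" unfolding C3_def by simp
  have C1: "C1 \<ge> 0" unfolding C1_def using C3 by simp
  have C2: "C2 \<ge> 0" unfolding C2_def using K T by simp
  define C where "C = C1 + C2 + C3"
  show ?thesis
  proof (intro exI[of _ C] allI impI conjI)
    fix n :: nat and x :: real assume n: "n \<ge> 1"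
    have hp: "(T / real n) powr (p/2) \<ge> 0" by simp
    have MDp: "Erad n (\<lambda>e. \<bar>Dn T n k (\<lambda>e'. Xsch T b \<sigma> n 0 x e' l) e\<bar> powr p) \<le> C3"
      if "1 \<le> k" "k \<le> n" "l \<le> n" for k l
      unfolding C3_def using MD[OF T gd n that p _ PLK] K by simp
    show "Erad n (\<lambda>e. \<bar>Dn T n k (\<lambda>e'. Xsch T b \<sigma> n 0 x e' m) e\<bar> powr p) \<le> C"
      if "1 \<le> k \<and> k \<le> m \<and> m \<le> n" for k m
    proof -
      have "Erad n (\<lambda>e. \<bar>Dn T n k (\<lambda>e'. Xsch T b \<sigma> n 0 x e' m) e\<bar> powr p) \<le> C3"
        using that by (intro MDp) auto
      then show ?thesis unfolding C_def using C1 C2 by simp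
    qed
    show "Erad n (\<lambda>e. \<bar>gradX T b \<sigma> n k (Xsch T b \<sigma> n 0 x e k) e m
           - Dn T n (Suc k) (\<lambda>e'. Xsch T b \<sigma> n 0 x e' m) e
             / \<sigma> (real (Suc k) * (T / n)) (Xsch T b \<sigma> n 0 x e k)\<bar> powr p)
         \<le> C * (T / n) powr (p / 2)" if "k < m \<and> m \<le> n" for k m
    proof -
      have "Erad n (\<lambda>e. \<bar>gradX T b \<sigma> n k (Xsch T b \<sigma> n 0 x e k) e m
           - Dn T n (Suc k) (\<lambda>e'. Xsch T b \<sigma> n 0 x e' m) e
             / \<sigma> (real (Suc k) * (T / n)) (Xsch T b \<sigma> n 0 x e k)\<bar> powr p) \<le> C2 * (T / n) powr (p / 2)"
        unfolding C2_def using that K K2 by (intro PartII[OF T gd n _ _ p _ _ PLK PLK2]) auto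
      also have "\<dots> \<le> C * (T / n) powr (p / 2)" unfolding C_def using C1 C3 hp by (intro mult_right_mono) auto
      finally show ?thesis .
    qed
    show "Erad n (\<lambda>e. \<bar>Xsch T b \<sigma> n 0 x e l - Tshift m s (\<lambda>e'. Xsch T b \<sigma> n 0 x e' l) e\<bar> powr p)
         \<le> C * (T / n) powr (p / 2)" if "1 \<le> l \<and> l \<le> n \<and> 1 \<le> m \<and> m \<le> n \<and> s \<in> {1, -1}" for l m s
    proof -
      have "Erad n (\<lambda>e. \<bar>Xsch T b \<sigma> n 0 x e l - Tshift m s (\<lambda>e'. Xsch T b \<sigma> n 0 x e' l) e\<bar> powr p)
         \<le> Erad n (\<lambda>e. (T / n) powr (p/2) * (2 powr p * \<bar>Dn T n m (\<lambda>e'. Xsch T b \<sigma> n 0 x e' l) e\<bar> powr p))"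
        using that p by (intro Erad_mono PartI_pt[OF T n]) auto
      also have "\<dots> = (T / n) powr (p/2) * (2 powr p * Erad n (\<lambda>e. \<bar>Dn T n m (\<lambda>e'. Xsch T b \<sigma> n 0 x e' l) e\<bar> powr p))"
        by (simp add: Erad_scale)
      also have "\<dots> \<le> (T / n) powr (p/2) * (2 powr p * C3)"
        using MDp[of m l] that hp by (intro mult_left_mono) auto
      also have "\<dots> = C1 * (T / n) powr (p/2)" unfolding C1_def by simp
      also have "\<dots> \<le> C * (T / n) powr (p / 2)" unfolding C_def using C2 C3 hp by (intro mult_right_mono) auto
      finally show ?thesis .
    qed
  qed
qed

end
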